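(* Let $B$ be a brace such that $B=\operatorname{Soc}_n(B)$ for some $n\in\mathbb{N}$. If the group $(B,\cdot)$ is supersoluble, then $B$ is supersoluble.
   Context: A brace (skew left brace) is a set $B$ with two binary operations $+$ and $\cdot$ such that $(B,+)$ and $(B,\cdot)$ are groups and $a(b+c)=ab-a+ac$ for all $a,b,c\in B$. $\lambda_a(b)=-a+ab$ defines a homomorphism $\lambda\colon(B,\cdot)\to\operatorname{Aut}(B,+)$. An ideal is a subset that is a subgroup of both groups, normal in both, and invariant under all $\lambda_b$; quotients by ideals are braces. $\operatorname{Soc}(B)=\operatorname{Ker}\lambda\cap Z(B,+)$; $\operatorname{Soc}_0(B)=\{0\}$, $\operatorname{Soc}_{k+1}(B)/\operatorname{Soc}_k(B)=\operatorname{Soc}(B/\operatorname{Soc}_k(B))$. A brace $B$ is supersoluble if there is a finite chain of ideals $\{0\}=I_0\le\dots\le I_m=B$ such that for each $i$, either $(I_{i+1}/I_i,+)$ is infinite cyclic and $I_{i+1}/I_i\le\operatorname{Soc}(B/I_i)$, or $I_{i+1}/I_i$ has prime order. A group is supersoluble in the usual sense (finite normal series with cyclic factors). *)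

theory Defs
  imports "HOL-Algebra.Algebra" "HOL-Computational_Algebra.Primes"
begin

text \<open>A (skew left) brace is given by two HOL-Algebra group structures A (the additive
  group, whose operation is written with the multiplication symbol of HOL-Algebra)
  and M (the multiplicative group) on the same carrier, satisfying
  a(b+c) = ab - a + ac.\<close>

definition brace :: "('a, 'b) monoid_scheme \<Rightarrow> ('a, 'c) monoid_scheme \<Rightarrow> bool" where
  "brace A M \<longleftrightarrow> group A \<and> group M \<and> carrier A = carrier M \<and>
     (\<forall>a\<in>carrier A. \<forall>b\<in>carrier A. \<forall>c\<in>carrier A.
        a \<otimes>\<^bsub>M\<^esub> (b \<otimes>\<^bsub>A\<^esub> c)
        = (a \<otimes>\<^bsub>M\<^esub> b) \<otimes>\<^bsub>A\<^esub> inv\<^bsub>A\<^esub> a \<otimes>\<^bsub>A\<^esub> (a \<otimes>\<^bsub>M\<^esub> c))"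

definition brace_lambda :: "('a, 'b) monoid_scheme \<Rightarrow> ('a, 'c) monoid_scheme \<Rightarrow> 'a \<Rightarrow> 'a \<Rightarrow> 'a" where
  "brace_lambda A M a b = inv\<^bsub>A\<^esub> a \<otimes>\<^bsub>A\<^esub> (a \<otimes>\<^bsub>M\<^esub> b)"

definition group_center :: "('a, 'b) monoid_scheme \<Rightarrow> 'a set" where
  "group_center G = {z \<in> carrier G. \<forall>g\<in>carrier G. z \<otimes>\<^bsub>G\<^esub> g = g \<otimes>\<^bsub>G\<^esub> z}"

definition brace_ideal :: "('a, 'b) monoid_scheme \<Rightarrow> ('a, 'c) monoid_scheme \<Rightarrow> 'a set \<Rightarrow> bool" where
  "brace_ideal A M I \<longleftrightarrow> subgroup I A \<and> subgroup I M \<and> I \<lhd> A \<and> I \<lhd> M \<and>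
     (\<forall>b\<in>carrier A. brace_lambda A M b ` I \<subseteq> I)"

definition brace_socle :: "('a, 'b) monoid_scheme \<Rightarrow> ('a, 'c) monoid_scheme \<Rightarrow> 'a set" where
  "brace_socle A M =
     {a \<in> carrier A. \<forall>x\<in>carrier A. brace_lambda A M a x = x} \<inter> group_center A"

text \<open>Socle series: Soc_0 = 0, and Soc_(k+1) is the preimage of Soc(B/Soc_k) under the
  canonical projection B \<rightarrow> B/Soc_k. The quotient brace B/I is (A Mod I, M Mod I);
  its elements are the cosets of I, so the preimage is the union of these cosets.\<close>
primrec soc_series :: "('a, 'b) monoid_scheme \<Rightarrow> ('a, 'c) monoid_scheme \<Rightarrow> nat \<Rightarrow> 'a set" where
  "soc_series A M 0 = {\<one>\<^bsub>A\<^esub>}"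
| "soc_series A M (Suc k) =
     \<Union> (brace_socle (A Mod (soc_series A M k)) (M Mod (soc_series A M k)))"

definition supersoluble_brace :: "('a, 'b) monoid_scheme \<Rightarrow> ('a, 'c) monoid_scheme \<Rightarrow> bool" where
  "supersoluble_brace A M \<longleftrightarrow>
     (\<exists>(I :: nat \<Rightarrow> 'a set) (m::nat).
        I 0 = {\<one>\<^bsub>A\<^esub>} \<and> I m = carrier A \<and>
        (\<forall>i\<le>m. brace_ideal A M (I i)) \<and>
        (\<forall>i<m. I i \<subseteq> I (Suc i)) \<and>
        (\<forall>i<m.
           (infinite (carrier ((A\<lparr>carrier := I (Suc i)\<rparr>) Mod (I i))) \<and>
            cyclic_group ((A\<lparr>carrier := I (Suc i)\<rparr>) Mod (I i)) \<and>
            carrier ((A\<lparr>carrier := I (Suc i)\<rparr>) Mod (I i))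
              \<subseteq> brace_socle (A Mod (I i)) (M Mod (I i)))
           \<or> Factorial_Ring.prime (card (carrier ((A\<lparr>carrier := I (Suc i)\<rparr>) Mod (I i))))))"

definition supersoluble_group :: "('a, 'b) monoid_scheme \<Rightarrow> bool" where
  "supersoluble_group G \<longleftrightarrow>
     (\<exists>(N :: nat \<Rightarrow> 'a set) (m::nat).
        N 0 = {\<one>\<^bsub>G\<^esub>} \<and> N m = carrier G \<and>
        (\<forall>i\<le>m. N i \<lhd> G) \<and>
        (\<forall>i<m. N i \<subseteq> N (Suc i)) \<and>
        (\<forall>i<m. cyclic_group ((G\<lparr>carrier := N (Suc i)\<rparr>) Mod (N i))))"

end

theory Submission
  imports Defs
begin


locale brace_loc = A: group A + M: group M
  for A :: "('a, 'b) monoid_scheme" and M :: "('a, 'c) monoid_scheme" +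
  assumes ceq: "carrier M = carrier A"
  and dist: "\<lbrakk>a \<in> carrier A; b \<in> carrier A; c \<in> carrier A\<rbrakk> \<Longrightarrow>
     a \<otimes>\<^bsub>M\<^esub> (b \<otimes>\<^bsub>A\<^esub> c)
        = (a \<otimes>\<^bsub>M\<^esub> b) \<otimes>\<^bsub>A\<^esub> inv\<^bsub>A\<^esub> a \<otimes>\<^bsub>A\<^esub> (a \<otimes>\<^bsub>M\<^esub> c)"
begin

abbreviation lam where "lam \<equiv> brace_lambda A M"

lemma Mc[simp]: "x \<in> carrier A \<Longrightarrow> y \<in> carrier A \<Longrightarrow> x \<otimes>\<^bsub>M\<^esub> y \<in> carrier A"
  using M.m_closed ceq by auto

lemma Mi[simp]: "x \<in> carrier A \<Longrightarrow> inv\<^bsub>M\<^esub> x \<in> carrier A"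
  using M.inv_closed ceq by auto

lemma one_eq: "\<one>\<^bsub>M\<^esub> = \<one>\<^bsub>A\<^esub>"
proof -
  have o: "\<one>\<^bsub>M\<^esub> \<in> carrier A" using ceq by auto
  let ?a = "\<one>\<^bsub>M\<^esub>" let ?z = "\<one>\<^bsub>A\<^esub>"
  have w: "?a \<otimes>\<^bsub>M\<^esub> ?z = ?z" using ceq by simp
  have "?a \<otimes>\<^bsub>M\<^esub> (?z \<otimes>\<^bsub>A\<^esub> ?z) = (?a \<otimes>\<^bsub>M\<^esub> ?z) \<otimes>\<^bsub>A\<^esub> inv\<^bsub>A\<^esub> ?a \<otimes>\<^bsub>A\<^esub> (?a \<otimes>\<^bsub>M\<^esub> ?z)"
    by (rule dist[OF o A.one_closed A.one_closed])
  hence "?z = ?z \<otimes>\<^bsub>A\<^esub> inv\<^bsub>A\<^esub> ?a \<otimes>\<^bsub>A\<^esub> ?z"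
    using w by (metis A.one_closed A.l_one)
  hence "?z = inv\<^bsub>A\<^esub> ?a" using o by (metis A.inv_closed A.l_one A.r_one)
  thus ?thesis using o
    by (metis A.inv_inv A.inv_one)
qed

lemma lam_def': "lam a b = inv\<^bsub>A\<^esub> a \<otimes>\<^bsub>A\<^esub> (a \<otimes>\<^bsub>M\<^esub> b)"
  by (simp add: brace_lambda_def)

lemma lam_closed[simp]: "a \<in> carrier A \<Longrightarrow> b \<in> carrier A \<Longrightarrow> lam a b \<in> carrier A"
  by (simp add: lam_def')

lemma mult_eq: "a \<in> carrier A \<Longrightarrow> b \<in> carrier A \<Longrightarrow> a \<otimes>\<^bsub>M\<^esub> b = a \<otimes>\<^bsub>A\<^esub> lam a b"
  by (simp add: lam_def' A.m_assoc[symmetric])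

lemma lam_add: "a \<in> carrier A \<Longrightarrow> b \<in> carrier A \<Longrightarrow> c \<in> carrier A \<Longrightarrow>
   lam a (b \<otimes>\<^bsub>A\<^esub> c) = lam a b \<otimes>\<^bsub>A\<^esub> lam a c"
  by (simp add: lam_def' dist A.m_assoc)

lemma lam_mult: "a \<in> carrier A \<Longrightarrow> b \<in> carrier A \<Longrightarrow> c \<in> carrier A \<Longrightarrow>
   lam (a \<otimes>\<^bsub>M\<^esub> b) c = lam a (lam b c)"
proof -
  assume a: "a \<in> carrier A" and b: "b \<in> carrier A" and c: "c \<in> carrier A"
  have "(a \<otimes>\<^bsub>M\<^esub> b) \<otimes>\<^bsub>M\<^esub> c = a \<otimes>\<^bsub>M\<^esub> (b \<otimes>\<^bsub>M\<^esub> c)"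
    using a b c by (simp add: M.m_assoc ceq)
  also have "b \<otimes>\<^bsub>M\<^esub> c = b \<otimes>\<^bsub>A\<^esub> lam b c" using b c by (rule mult_eq)
  also have "a \<otimes>\<^bsub>M\<^esub> (b \<otimes>\<^bsub>A\<^esub> lam b c) = (a \<otimes>\<^bsub>M\<^esub> b) \<otimes>\<^bsub>A\<^esub> (inv\<^bsub>A\<^esub> a \<otimes>\<^bsub>A\<^esub> (a \<otimes>\<^bsub>M\<^esub> lam b c))"
    using a b c by (simp add: dist A.m_assoc)
  finally have e: "(a \<otimes>\<^bsub>M\<^esub> b) \<otimes>\<^bsub>M\<^esub> c = (a \<otimes>\<^bsub>M\<^esub> b) \<otimes>\<^bsub>A\<^esub> lam a (lam b c)"
    by (simp add: lam_def')
  show ?thesis unfolding lam_def'[of "a \<otimes>\<^bsub>M\<^esub> b"] e using a b c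
    by (simp add: A.m_assoc[symmetric])
qed

lemma lam_one1[simp]: "c \<in> carrier A \<Longrightarrow> lam \<one>\<^bsub>A\<^esub> c = c"
  using one_eq by (metis A.inv_one A.l_one M.l_one ceq lam_def')

lemma lam_one2[simp]: "a \<in> carrier A \<Longrightarrow> lam a \<one>\<^bsub>A\<^esub> = \<one>\<^bsub>A\<^esub>"
  using one_eq by (metis A.l_inv M.r_one ceq lam_def')

lemma lam_invM1[simp]: "a \<in> carrier A \<Longrightarrow> c \<in> carrier A \<Longrightarrow> lam (inv\<^bsub>M\<^esub> a) (lam a c) = c"
  by (metis M.l_inv ceq lam_mult Mi lam_one1 one_eq)

lemma lam_invM2[simp]: "a \<in> carrier A \<Longrightarrow> c \<in> carrier A \<Longrightarrow> lam a (lam (inv\<^bsub>M\<^esub> a) c) = c"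
  by (metis M.r_inv ceq lam_mult Mi lam_one1 one_eq)

lemma lam_invA: "a \<in> carrier A \<Longrightarrow> b \<in> carrier A \<Longrightarrow> lam a (inv\<^bsub>A\<^esub> b) = inv\<^bsub>A\<^esub> (lam a b)"
  by (metis A.inv_closed A.inv_equality A.l_inv lam_add lam_closed lam_one2)

end


lemma (in group) rcos_eq_iff:
  assumes "subgroup H G" "x \<in> carrier G" "y \<in> carrier G"
  shows "(H #> x = H #> y) \<longleftrightarrow> x \<otimes> inv y \<in> H"
proof
  assume "H #> x = H #> y"
  hence "x \<in> H #> y" using rcos_self assms by blast
  thus "x \<otimes> inv y \<in> H" using subgroup.rcos_module_imp[OF assms(1) is_group assms(3)] by blast
next
  assume "x \<otimes> inv y \<in> H"
  hence "x \<in> H #> y" using subgroup.rcos_module_rev[OF assms(1) is_group assms(3) assms(2)] by blast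
  thus "H #> x = H #> y" using repr_independence assms by metis
qed

lemma (in group) rcos_eq_one_iff:
  assumes "subgroup H G" "x \<in> carrier G"
  shows "(H #> x = H #> \<one>) \<longleftrightarrow> x \<in> H"
  using rcos_eq_iff[OF assms(1) assms(2) one_closed] assms by simp

lemma (in group) rcos_one: "subgroup H G \<Longrightarrow> H #> \<one> = H"
  by (simp add: subgroup.subset)

context brace_loc begin

definition cs :: "'a set \<Rightarrow> 'a \<Rightarrow> 'a set" where "cs J x = J #>\<^bsub>A\<^esub> x"

lemma ideal_sub: "brace_ideal A M J \<Longrightarrow> J \<subseteq> carrier A"
  unfolding brace_ideal_def using subgroup.subset by blast

lemma ideal_nA: "brace_ideal A M J \<Longrightarrow> J \<lhd> A" unfolding brace_ideal_def by blast
lemma ideal_nM: "brace_ideal A M J \<Longrightarrow> J \<lhd> M" unfolding brace_ideal_def by blast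
lemma ideal_sA: "brace_ideal A M J \<Longrightarrow> subgroup J A" unfolding brace_ideal_def by blast
lemma ideal_sM: "brace_ideal A M J \<Longrightarrow> subgroup J M" unfolding brace_ideal_def by blast
lemma ideal_lam: "brace_ideal A M J \<Longrightarrow> a \<in> carrier A \<Longrightarrow> j \<in> J \<Longrightarrow> lam a j \<in> J"
  unfolding brace_ideal_def by blast

lemma lcos_MA:
  assumes bi: "brace_ideal A M J" and x: "x \<in> carrier A"
  shows "x <#\<^bsub>M\<^esub> J = x <#\<^bsub>A\<^esub> J"
proof
  show "x <#\<^bsub>M\<^esub> J \<subseteq> x <#\<^bsub>A\<^esub> J"
  proof
    fix z assume "z \<in> x <#\<^bsub>M\<^esub> J"
    then obtain j where j: "j \<in> J" "z = x \<otimes>\<^bsub>M\<^esub> j" unfolding l_coset_def by auto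
    have "z = x \<otimes>\<^bsub>A\<^esub> lam x j" using j x ideal_sub[OF bi] mult_eq by auto
    thus "z \<in> x <#\<^bsub>A\<^esub> J" using ideal_lam[OF bi x j(1)] unfolding l_coset_def by auto
  qed
next
  show "x <#\<^bsub>A\<^esub> J \<subseteq> x <#\<^bsub>M\<^esub> J"
  proof
    fix z assume "z \<in> x <#\<^bsub>A\<^esub> J"
    then obtain j where j: "j \<in> J" "z = x \<otimes>\<^bsub>A\<^esub> j" unfolding l_coset_def by auto
    have jc: "j \<in> carrier A" using j ideal_sub[OF bi] by auto
    have "z = x \<otimes>\<^bsub>M\<^esub> lam (inv\<^bsub>M\<^esub> x) j" using j x jc mult_eq by auto
    thus "z \<in> x <#\<^bsub>M\<^esub> J" using ideal_lam[OF bi _ j(1), of "inv\<^bsub>M\<^esub> x"] x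
      unfolding l_coset_def by auto
  qed
qed

lemma rcos_MA:
  assumes bi: "brace_ideal A M J" and x: "x \<in> carrier A"
  shows "J #>\<^bsub>M\<^esub> x = J #>\<^bsub>A\<^esub> x"
proof -
  have "J #>\<^bsub>M\<^esub> x = x <#\<^bsub>M\<^esub> J" using normal.coset_eq[OF ideal_nM[OF bi]] x ceq by auto
  also have "\<dots> = x <#\<^bsub>A\<^esub> J" by (rule lcos_MA[OF bi x])
  also have "\<dots> = J #>\<^bsub>A\<^esub> x" using normal.coset_eq[OF ideal_nA[OF bi]] x by auto
  finally show ?thesis .
qed

lemma cs_iff: "brace_ideal A M J \<Longrightarrow> x \<in> carrier A \<Longrightarrow> y \<in> carrier A \<Longrightarrow>
   cs J x = cs J y \<longleftrightarrow> x \<otimes>\<^bsub>A\<^esub> inv\<^bsub>A\<^esub> y \<in> J"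
  unfolding cs_def using A.rcos_eq_iff ideal_sA by blast

lemma cs_iffM: "brace_ideal A M J \<Longrightarrow> x \<in> carrier A \<Longrightarrow> y \<in> carrier A \<Longrightarrow>
   cs J x = cs J y \<longleftrightarrow> x \<otimes>\<^bsub>M\<^esub> inv\<^bsub>M\<^esub> y \<in> J"
  unfolding cs_def using M.rcos_eq_iff ideal_sM rcos_MA ceq by metis

lemma cs_one_iff: "brace_ideal A M J \<Longrightarrow> x \<in> carrier A \<Longrightarrow> cs J x = cs J \<one>\<^bsub>A\<^esub> \<longleftrightarrow> x \<in> J"
  unfolding cs_def using A.rcos_eq_one_iff ideal_sA by blast

lemma cong_add: assumes bi: "brace_ideal A M J"
  and c: "x \<in> carrier A" "x' \<in> carrier A" "y \<in> carrier A" "y' \<in> carrier A"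
  and e: "cs J x = cs J x'" "cs J y = cs J y'"
  shows "cs J (x \<otimes>\<^bsub>A\<^esub> y) = cs J (x' \<otimes>\<^bsub>A\<^esub> y')"
  using e c normal.rcos_sum[OF ideal_nA[OF bi]] unfolding cs_def by metis

lemma cong_mul: assumes bi: "brace_ideal A M J"
  and c: "x \<in> carrier A" "x' \<in> carrier A" "y \<in> carrier A" "y' \<in> carrier A"
  and e: "cs J x = cs J x'" "cs J y = cs J y'"
  shows "cs J (x \<otimes>\<^bsub>M\<^esub> y) = cs J (x' \<otimes>\<^bsub>M\<^esub> y')"
proof -
  have "cs J (x \<otimes>\<^bsub>M\<^esub> y) = (J #>\<^bsub>M\<^esub> x) <#>\<^bsub>M\<^esub> (J #>\<^bsub>M\<^esub> y)"
    using normal.rcos_sum[OF ideal_nM[OF bi]] c ceq rcos_MA[OF bi] unfolding cs_def by simp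
  also have "\<dots> = (J #>\<^bsub>M\<^esub> x') <#>\<^bsub>M\<^esub> (J #>\<^bsub>M\<^esub> y')"
    using e c rcos_MA[OF bi] unfolding cs_def by simp
  also have "\<dots> = cs J (x' \<otimes>\<^bsub>M\<^esub> y')"
    using normal.rcos_sum[OF ideal_nM[OF bi]] c ceq rcos_MA[OF bi] unfolding cs_def by simp
  finally show ?thesis .
qed

lemma cong_inv: assumes bi: "brace_ideal A M J"
  and c: "x \<in> carrier A" "x' \<in> carrier A" and e: "cs J x = cs J x'"
  shows "cs J (inv\<^bsub>A\<^esub> x) = cs J (inv\<^bsub>A\<^esub> x')"
  using e c normal.rcos_inv[OF ideal_nA[OF bi]] unfolding cs_def by metis

lemma cong_lam: assumes bi: "brace_ideal A M J"
  and c: "a \<in> carrier A" "x \<in> carrier A" "x' \<in> carrier A" and e: "cs J x = cs J x'"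
  shows "cs J (lam a x) = cs J (lam a x')"
proof -
  have "x \<otimes>\<^bsub>A\<^esub> inv\<^bsub>A\<^esub> x' \<in> J" using cs_iff[OF bi] c e by blast
  hence "lam a (x \<otimes>\<^bsub>A\<^esub> inv\<^bsub>A\<^esub> x') \<in> J" using ideal_lam[OF bi c(1)] by blast
  hence "lam a x \<otimes>\<^bsub>A\<^esub> inv\<^bsub>A\<^esub> lam a x' \<in> J" using c by (simp add: lam_add lam_invA)
  thus ?thesis using cs_iff[OF bi] c by simp
qed

lemma cs_mem: "brace_ideal A M J \<Longrightarrow> j \<in> J \<Longrightarrow> cs J j = cs J \<one>\<^bsub>A\<^esub>"
  using cs_one_iff ideal_sub by blast

lemma one_ideal: "brace_ideal A M {\<one>\<^bsub>A\<^esub>}"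
  unfolding brace_ideal_def
  using A.one_is_normal M.one_is_normal one_eq normal_imp_subgroup by (metis empty_iff image_empty lam_one2 image_insert subset_singletonD subset_refl)

end


context brace_loc begin

definition socpre :: "'a set \<Rightarrow> 'a set" where
  "socpre J = {x \<in> carrier A. \<forall>y\<in>carrier A. cs J (lam x y) = cs J y
        \<and> cs J (x \<otimes>\<^bsub>A\<^esub> y) = cs J (y \<otimes>\<^bsub>A\<^esub> x)}"

lemma sp_sub: "socpre J \<subseteq> carrier A" unfolding socpre_def by auto

lemma sp_lam: "x \<in> socpre J \<Longrightarrow> y \<in> carrier A \<Longrightarrow> cs J (lam x y) = cs J y"
  unfolding socpre_def by auto

lemma sp_comm: "x \<in> socpre J \<Longrightarrow> y \<in> carrier A \<Longrightarrow> cs J (x \<otimes>\<^bsub>A\<^esub> y) = cs J (y \<otimes>\<^bsub>A\<^esub> x)"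
  unfolding socpre_def by auto

lemma sp_I: "x \<in> carrier A \<Longrightarrow> (\<And>y. y \<in> carrier A \<Longrightarrow> cs J (lam x y) = cs J y) \<Longrightarrow>
   (\<And>y. y \<in> carrier A \<Longrightarrow> cs J (x \<otimes>\<^bsub>A\<^esub> y) = cs J (y \<otimes>\<^bsub>A\<^esub> x)) \<Longrightarrow> x \<in> socpre J"
  unfolding socpre_def by auto

lemma sp_mult_cs: assumes bi: "brace_ideal A M J" and x: "x \<in> socpre J" and y: "y \<in> carrier A"
  shows "cs J (x \<otimes>\<^bsub>M\<^esub> y) = cs J (x \<otimes>\<^bsub>A\<^esub> y)"
proof -
  have xc: "x \<in> carrier A" using x sp_sub by auto
  have "x \<otimes>\<^bsub>M\<^esub> y = x \<otimes>\<^bsub>A\<^esub> lam x y" using xc y mult_eq by auto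
  thus ?thesis using cong_add[OF bi xc xc _ y refl sp_lam[OF x y]] xc y by simp
qed

lemma J_sub_sp: assumes bi: "brace_ideal A M J" shows "J \<subseteq> socpre J"
proof
  fix x assume x: "x \<in> J"
  have xc: "x \<in> carrier A" using x ideal_sub[OF bi] by auto
  have c1: "cs J x = cs J \<one>\<^bsub>A\<^esub>" using cs_mem[OF bi x] .
  show "x \<in> socpre J"
  proof (rule sp_I[OF xc])
    fix y assume y: "y \<in> carrier A"
    have "cs J (lam x y) = cs J (inv\<^bsub>A\<^esub> x \<otimes>\<^bsub>A\<^esub> (x \<otimes>\<^bsub>M\<^esub> y))" by (simp add: lam_def')
    also have "\<dots> = cs J (inv\<^bsub>A\<^esub> \<one>\<^bsub>A\<^esub> \<otimes>\<^bsub>A\<^esub> (\<one>\<^bsub>M\<^esub> \<otimes>\<^bsub>M\<^esub> y))"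
      apply (rule cong_add[OF bi])
      using xc y apply (simp_all add: one_eq)
      using cong_inv[OF bi xc _ c1] apply simp
      using cong_mul[OF bi xc _ y y c1[folded one_eq]] one_eq by simp
    also have "\<dots> = cs J y" using y ceq by simp
    finally show "cs J (lam x y) = cs J y" .
    have "cs J (x \<otimes>\<^bsub>A\<^esub> y) = cs J (\<one>\<^bsub>A\<^esub> \<otimes>\<^bsub>A\<^esub> y)"
      using cong_add[OF bi xc _ y y c1] y by simp
    also have "\<dots> = cs J (y \<otimes>\<^bsub>A\<^esub> \<one>\<^bsub>A\<^esub>)" using y by simp
    also have "\<dots> = cs J (y \<otimes>\<^bsub>A\<^esub> x)"
      using cong_add[OF bi y y _ xc refl c1[symmetric]] y by simp
    finally show "cs J (x \<otimes>\<^bsub>A\<^esub> y) = cs J (y \<otimes>\<^bsub>A\<^esub> x)" .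
  qed
qed

lemma sp_one: "brace_ideal A M J \<Longrightarrow> \<one>\<^bsub>A\<^esub> \<in> socpre J"
  using J_sub_sp ideal_sA subgroup.one_closed by blast

lemma sp_mulM: assumes bi: "brace_ideal A M J" and x: "x \<in> socpre J" and y: "y \<in> socpre J"
  shows "x \<otimes>\<^bsub>M\<^esub> y \<in> socpre J"
proof -
  have xc: "x \<in> carrier A" and yc: "y \<in> carrier A" using x y sp_sub by auto
  show ?thesis
  proof (rule sp_I)
    show "x \<otimes>\<^bsub>M\<^esub> y \<in> carrier A" using xc yc by simp
  next
    fix z assume z: "z \<in> carrier A"
    have "cs J (lam (x \<otimes>\<^bsub>M\<^esub> y) z) = cs J (lam x (lam y z))" using xc yc z lam_mult by simp
    also have "\<dots> = cs J (lam y z)" using sp_lam[OF x] yc z by simp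
    also have "\<dots> = cs J z" using sp_lam[OF y] z by simp
    finally show "cs J (lam (x \<otimes>\<^bsub>M\<^esub> y) z) = cs J z" .
  next
    fix z assume z: "z \<in> carrier A"
    have e: "cs J (x \<otimes>\<^bsub>M\<^esub> y) = cs J (x \<otimes>\<^bsub>A\<^esub> y)" by (rule sp_mult_cs[OF bi x yc])
    have "cs J ((x \<otimes>\<^bsub>M\<^esub> y) \<otimes>\<^bsub>A\<^esub> z) = cs J ((x \<otimes>\<^bsub>A\<^esub> y) \<otimes>\<^bsub>A\<^esub> z)"
      using cong_add[OF bi _ _ z z e] xc yc by simp
    also have "\<dots> = cs J (x \<otimes>\<^bsub>A\<^esub> (y \<otimes>\<^bsub>A\<^esub> z))" using xc yc z by (simp add: A.m_assoc)
    also have "\<dots> = cs J ((y \<otimes>\<^bsub>A\<^esub> z) \<otimes>\<^bsub>A\<^esub> x)" using sp_comm[OF x] yc z by simp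
    also have "\<dots> = cs J (y \<otimes>\<^bsub>A\<^esub> (z \<otimes>\<^bsub>A\<^esub> x))" using xc yc z by (simp add: A.m_assoc)
    also have "\<dots> = cs J ((z \<otimes>\<^bsub>A\<^esub> x) \<otimes>\<^bsub>A\<^esub> y)" using sp_comm[OF y] xc z by simp
    also have "\<dots> = cs J (z \<otimes>\<^bsub>A\<^esub> (x \<otimes>\<^bsub>A\<^esub> y))" using xc yc z by (simp add: A.m_assoc)
    also have "\<dots> = cs J (z \<otimes>\<^bsub>A\<^esub> (x \<otimes>\<^bsub>M\<^esub> y))"
      using cong_add[OF bi z z _ _ refl e[symmetric]] xc yc z by simp
    finally show "cs J ((x \<otimes>\<^bsub>M\<^esub> y) \<otimes>\<^bsub>A\<^esub> z) = cs J (z \<otimes>\<^bsub>A\<^esub> (x \<otimes>\<^bsub>M\<^esub> y))" .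
  qed
qed

lemma sp_invA_comm: assumes bi: "brace_ideal A M J" and x: "x \<in> socpre J" and z: "z \<in> carrier A"
  shows "cs J (inv\<^bsub>A\<^esub> x \<otimes>\<^bsub>A\<^esub> z) = cs J (z \<otimes>\<^bsub>A\<^esub> inv\<^bsub>A\<^esub> x)"
proof -
  have xc: "x \<in> carrier A" using x sp_sub by auto
  have "cs J (x \<otimes>\<^bsub>A\<^esub> (z \<otimes>\<^bsub>A\<^esub> inv\<^bsub>A\<^esub> x)) = cs J ((z \<otimes>\<^bsub>A\<^esub> inv\<^bsub>A\<^esub> x) \<otimes>\<^bsub>A\<^esub> x)"
    using sp_comm[OF x] xc z by simp
  also have "\<dots> = cs J z" using xc z by (simp add: A.m_assoc)
  finally have e: "cs J z = cs J (x \<otimes>\<^bsub>A\<^esub> (z \<otimes>\<^bsub>A\<^esub> inv\<^bsub>A\<^esub> x))" by simp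
  have "cs J (inv\<^bsub>A\<^esub> x \<otimes>\<^bsub>A\<^esub> z) = cs J (inv\<^bsub>A\<^esub> x \<otimes>\<^bsub>A\<^esub> (x \<otimes>\<^bsub>A\<^esub> (z \<otimes>\<^bsub>A\<^esub> inv\<^bsub>A\<^esub> x)))"
    using cong_add[OF bi _ _ z _ refl e] xc z by simp
  also have "\<dots> = cs J (z \<otimes>\<^bsub>A\<^esub> inv\<^bsub>A\<^esub> x)" using xc z by (simp add: A.m_assoc[symmetric])
  finally show ?thesis .
qed

lemma sp_invM_cs: assumes bi: "brace_ideal A M J" and x: "x \<in> socpre J"
  shows "cs J (inv\<^bsub>M\<^esub> x) = cs J (inv\<^bsub>A\<^esub> x)"
proof -
  have xc: "x \<in> carrier A" using x sp_sub by auto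
  have "x \<otimes>\<^bsub>A\<^esub> lam x (inv\<^bsub>M\<^esub> x) = \<one>\<^bsub>A\<^esub>"
    using mult_eq[OF xc, of "inv\<^bsub>M\<^esub> x"] xc ceq one_eq by (metis M.r_inv Mi)
  hence "lam x (inv\<^bsub>M\<^esub> x) = inv\<^bsub>A\<^esub> x" using xc
    by (metis A.inv_equality A.inv_inv A.inv_closed lam_closed Mi)
  hence "cs J (lam x (inv\<^bsub>M\<^esub> x)) = cs J (inv\<^bsub>A\<^esub> x)" by simp
  thus ?thesis using sp_lam[OF x, of "inv\<^bsub>M\<^esub> x"] xc by simp
qed

lemma sp_invM: assumes bi: "brace_ideal A M J" and x: "x \<in> socpre J"
  shows "inv\<^bsub>M\<^esub> x \<in> socpre J"
proof -
  have xc: "x \<in> carrier A" using x sp_sub by auto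
  show ?thesis
  proof (rule sp_I)
    show "inv\<^bsub>M\<^esub> x \<in> carrier A" using xc by simp
  next
    fix z assume z: "z \<in> carrier A"
    have "cs J (lam (inv\<^bsub>M\<^esub> x) z) = cs J (lam x (lam (inv\<^bsub>M\<^esub> x) z))"
      using sp_lam[OF x, of "lam (inv\<^bsub>M\<^esub> x) z"] xc z by simp
    also have "\<dots> = cs J z" using xc z by simp
    finally show "cs J (lam (inv\<^bsub>M\<^esub> x) z) = cs J z" .
  next
    fix z assume z: "z \<in> carrier A"
    have e: "cs J (inv\<^bsub>M\<^esub> x) = cs J (inv\<^bsub>A\<^esub> x)" by (rule sp_invM_cs[OF bi x])
    have "cs J (inv\<^bsub>M\<^esub> x \<otimes>\<^bsub>A\<^esub> z) = cs J (inv\<^bsub>A\<^esub> x \<otimes>\<^bsub>A\<^esub> z)"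
      using cong_add[OF bi _ _ z z e] xc by simp
    also have "\<dots> = cs J (z \<otimes>\<^bsub>A\<^esub> inv\<^bsub>A\<^esub> x)" by (rule sp_invA_comm[OF bi x z])
    also have "\<dots> = cs J (z \<otimes>\<^bsub>A\<^esub> inv\<^bsub>M\<^esub> x)"
      using cong_add[OF bi z z _ _ refl e[symmetric]] xc by simp
    finally show "cs J (inv\<^bsub>M\<^esub> x \<otimes>\<^bsub>A\<^esub> z) = cs J (z \<otimes>\<^bsub>A\<^esub> inv\<^bsub>M\<^esub> x)" .
  qed
qed

lemma sp_lam_comm: assumes bi: "brace_ideal A M J" and x: "x \<in> socpre J"
  and b: "b \<in> carrier A" and z: "z \<in> carrier A"
  shows "cs J (lam b x \<otimes>\<^bsub>A\<^esub> z) = cs J (z \<otimes>\<^bsub>A\<^esub> lam b x)"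
proof -
  have xc: "x \<in> carrier A" using x sp_sub by auto
  define u where "u = lam (inv\<^bsub>M\<^esub> b) z"
  have u: "u \<in> carrier A" "z = lam b u" using b z unfolding u_def by simp_all
  have "cs J (lam b x \<otimes>\<^bsub>A\<^esub> z) = cs J (lam b (x \<otimes>\<^bsub>A\<^esub> u))" using u b xc lam_add by simp
  also have "\<dots> = cs J (lam b (u \<otimes>\<^bsub>A\<^esub> x))"
    using cong_lam[OF bi b _ _ sp_comm[OF x u(1)]] xc u by simp
  also have "\<dots> = cs J (z \<otimes>\<^bsub>A\<^esub> lam b x)" using u b xc lam_add by simp
  finally show ?thesis .
qed

lemma sp_conj: assumes bi: "brace_ideal A M J" and x: "x \<in> socpre J" and b: "b \<in> carrier A"
  shows "b \<otimes>\<^bsub>M\<^esub> x \<otimes>\<^bsub>M\<^esub> inv\<^bsub>M\<^esub> b \<in> socpre J"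
    and "cs J (b \<otimes>\<^bsub>M\<^esub> x \<otimes>\<^bsub>M\<^esub> inv\<^bsub>M\<^esub> b) = cs J (lam b x)"
proof -
  have xc: "x \<in> carrier A" using x sp_sub by auto
  define y where "y = b \<otimes>\<^bsub>M\<^esub> x \<otimes>\<^bsub>M\<^esub> inv\<^bsub>M\<^esub> b"
  have yc: "y \<in> carrier A" unfolding y_def using b xc by simp
  have ylam: "cs J (lam y z) = cs J z" if z: "z \<in> carrier A" for z
  proof -
    have "lam y z = lam b (lam x (lam (inv\<^bsub>M\<^esub> b) z))" unfolding y_def
      using b xc z by (simp add: lam_mult)
    hence "cs J (lam y z) = cs J (lam b (lam (inv\<^bsub>M\<^esub> b) z))"
      using cong_lam[OF bi b _ _ sp_lam[OF x, of "lam (inv\<^bsub>M\<^esub> b) z"]] b xc z by simp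
    thus ?thesis using b z by simp
  qed
  have "y \<otimes>\<^bsub>M\<^esub> b = b \<otimes>\<^bsub>M\<^esub> x" unfolding y_def using b xc ceq by (simp add: M.m_assoc)
  hence "y \<otimes>\<^bsub>A\<^esub> lam y b = b \<otimes>\<^bsub>A\<^esub> lam b x" using mult_eq b xc yc by simp
  hence "cs J (y \<otimes>\<^bsub>A\<^esub> b) = cs J (b \<otimes>\<^bsub>A\<^esub> lam b x)"
    using cong_add[OF bi yc yc _ b refl ylam[OF b]] b yc by simp
  also have "\<dots> = cs J (lam b x \<otimes>\<^bsub>A\<^esub> b)" using sp_lam_comm[OF bi x b b] by simp
  finally have e: "cs J (y \<otimes>\<^bsub>A\<^esub> b) = cs J (lam b x \<otimes>\<^bsub>A\<^esub> b)" .
  have "cs J ((y \<otimes>\<^bsub>A\<^esub> b) \<otimes>\<^bsub>A\<^esub> inv\<^bsub>A\<^esub> b) = cs J ((lam b x \<otimes>\<^bsub>A\<^esub> b) \<otimes>\<^bsub>A\<^esub> inv\<^bsub>A\<^esub> b)"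
    using cong_add[OF bi _ _ _ _ e refl] b yc xc by simp
  hence e2: "cs J y = cs J (lam b x)" using b yc xc by (simp add: A.m_assoc)
  thus "cs J (b \<otimes>\<^bsub>M\<^esub> x \<otimes>\<^bsub>M\<^esub> inv\<^bsub>M\<^esub> b) = cs J (lam b x)" unfolding y_def .
  show "b \<otimes>\<^bsub>M\<^esub> x \<otimes>\<^bsub>M\<^esub> inv\<^bsub>M\<^esub> b \<in> socpre J" unfolding y_def[symmetric]
  proof (rule sp_I[OF yc])
    fix z assume z: "z \<in> carrier A"
    show "cs J (lam y z) = cs J z" by (rule ylam[OF z])
    have "cs J (y \<otimes>\<^bsub>A\<^esub> z) = cs J (lam b x \<otimes>\<^bsub>A\<^esub> z)" using cong_add[OF bi _ _ z z e2] yc b xc by simp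
    also have "\<dots> = cs J (z \<otimes>\<^bsub>A\<^esub> lam b x)" by (rule sp_lam_comm[OF bi x b z])
    also have "\<dots> = cs J (z \<otimes>\<^bsub>A\<^esub> y)" using cong_add[OF bi z z _ _ refl e2[symmetric]] yc b xc by simp
    finally show "cs J (y \<otimes>\<^bsub>A\<^esub> z) = cs J (z \<otimes>\<^bsub>A\<^esub> y)" .
  qed
qed

lemma sp_normal: assumes bi: "brace_ideal A M J" shows "socpre J \<lhd> M"
proof -
  have sg: "subgroup (socpre J) M"
    apply (rule M.subgroupI)
    using sp_sub ceq apply blast
    using sp_one[OF bi] apply blast
    using sp_invM[OF bi] apply blast
    using sp_mulM[OF bi] by blast
  show ?thesis
    unfolding M.normal_inv_iff using sg sp_conj(1)[OF bi] ceq by blast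
qed

lemma lemmaA: assumes bi: "brace_ideal A M J" and L: "L \<lhd> M"
  and JL: "J \<subseteq> L" and Ls: "L \<subseteq> socpre J"
  shows "brace_ideal A M L"
proof -
  have Lc: "L \<subseteq> carrier A" using Ls sp_sub by blast
  have sgM: "subgroup L M" using L normal_imp_subgroup by blast
  have memL: "x \<in> L" if x: "x \<in> carrier A" and y: "y \<in> L" and e: "cs J x = cs J y" for x y
  proof -
    have yc: "y \<in> carrier A" using y Lc by blast
    have "x \<otimes>\<^bsub>M\<^esub> inv\<^bsub>M\<^esub> y \<in> L" using cs_iffM[OF bi x yc] e JL by blast
    hence "(x \<otimes>\<^bsub>M\<^esub> inv\<^bsub>M\<^esub> y) \<otimes>\<^bsub>M\<^esub> y \<in> L" using y subgroup.m_closed[OF sgM] by blast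
    thus ?thesis using x yc ceq by (simp add: M.m_assoc)
  qed
  have sgA: "subgroup L A"
  proof (rule A.subgroupI[OF Lc])
    show "L \<noteq> {}" using subgroup.one_closed[OF sgM] by blast
  next
    fix a assume a: "a \<in> L"
    have ac: "a \<in> carrier A" using a Lc by blast
    have i: "inv\<^bsub>M\<^esub> a \<in> L" using a subgroup.m_inv_closed[OF sgM] by blast
    have as: "a \<in> socpre J" using a Ls by blast
    show "inv\<^bsub>A\<^esub> a \<in> L" using memL[OF A.inv_closed[OF ac] i sp_invM_cs[OF bi as, symmetric]] .
  next
    fix a b assume a: "a \<in> L" and b: "b \<in> L"
    have ac: "a \<in> carrier A" and bc: "b \<in> carrier A" using a b Lc by auto
    have i: "a \<otimes>\<^bsub>M\<^esub> b \<in> L" using a b subgroup.m_closed[OF sgM] by blast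
    have as: "a \<in> socpre J" using a Ls by blast
    show "a \<otimes>\<^bsub>A\<^esub> b \<in> L" using memL[OF A.m_closed[OF ac bc] i sp_mult_cs[OF bi as bc, symmetric]] .
  qed
  have nA: "L \<lhd> A" unfolding A.normal_inv_iff
  proof (intro conjI sgA ballI)
    fix a h assume a: "a \<in> carrier A" and h: "h \<in> L"
    have hc: "h \<in> carrier A" using h Lc by auto
    have hs: "h \<in> socpre J" using h Ls by blast
    have "cs J (a \<otimes>\<^bsub>A\<^esub> h \<otimes>\<^bsub>A\<^esub> inv\<^bsub>A\<^esub> a) = cs J (h \<otimes>\<^bsub>A\<^esub> a \<otimes>\<^bsub>A\<^esub> inv\<^bsub>A\<^esub> a)"
      using cong_add[OF bi A.m_closed[OF a hc] A.m_closed[OF hc a] A.inv_closed[OF a] A.inv_closed[OF a] sp_comm[OF hs a, symmetric] refl] .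
    also have "\<dots> = cs J h" using a hc by (simp add: A.m_assoc)
    finally show "a \<otimes>\<^bsub>A\<^esub> h \<otimes>\<^bsub>A\<^esub> inv\<^bsub>A\<^esub> a \<in> L" using memL[OF _ h] a hc by simp
  qed
  have lamL: "\<forall>b\<in>carrier A. lam b ` L \<subseteq> L"
  proof (intro ballI subsetI)
    fix b z assume b: "b \<in> carrier A" and z: "z \<in> lam b ` L"
    then obtain x where x: "x \<in> L" "z = lam b x" by auto
    have xc: "x \<in> carrier A" using x Lc by auto
    have "b \<otimes>\<^bsub>M\<^esub> x \<otimes>\<^bsub>M\<^esub> inv\<^bsub>M\<^esub> b \<in> L" using L x b ceq unfolding M.normal_inv_iff by auto
    moreover have xs: "x \<in> socpre J" using x Ls by blast
    ultimately show "z \<in> L" using memL[OF lam_closed[OF b xc] _ sp_conj(2)[OF bi xs b, symmetric]] x(2) by simp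
  qed
  show ?thesis unfolding brace_ideal_def using sgA sgM nA L lamL by blast
qed

lemma sp_ideal: "brace_ideal A M J \<Longrightarrow> brace_ideal A M (socpre J)"
  using lemmaA sp_normal J_sub_sp by blast

lemma sp_mono: assumes bi: "brace_ideal A M J" and bk: "brace_ideal A M K" and JK: "J \<subseteq> K"
  shows "socpre J \<subseteq> socpre K"
proof -
  have tr: "cs K x = cs K y" if "x \<in> carrier A" "y \<in> carrier A" "cs J x = cs J y" for x y
    using cs_iff[OF bi] cs_iff[OF bk] that JK by blast
  show ?thesis
  proof
    fix x assume x: "x \<in> socpre J"
    have xc: "x \<in> carrier A" using x sp_sub by auto
    show "x \<in> socpre K"
      by (rule sp_I[OF xc]; rule tr) (use sp_lam[OF x] sp_comm[OF x] xc in auto)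
  qed
qed

end


context brace_loc begin

lemma carrier_quot: "carrier (A Mod J) = cs J ` carrier A"
  unfolding cs_def carrier_FactGroup by simp

lemma quot_mult: "brace_ideal A M J \<Longrightarrow> x \<in> carrier A \<Longrightarrow> y \<in> carrier A \<Longrightarrow>
  cs J x \<otimes>\<^bsub>A Mod J\<^esub> cs J y = cs J (x \<otimes>\<^bsub>A\<^esub> y)"
  unfolding cs_def using normal.rcos_sum[OF ideal_nA] by simp

lemma quot_multM: "brace_ideal A M J \<Longrightarrow> x \<in> carrier A \<Longrightarrow> y \<in> carrier A \<Longrightarrow>
  cs J x \<otimes>\<^bsub>M Mod J\<^esub> cs J y = cs J (x \<otimes>\<^bsub>M\<^esub> y)"
  unfolding cs_def using normal.rcos_sum[OF ideal_nM] rcos_MA ceq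
  by (metis Mc mult_FactGroup)

lemma quot_inv: assumes bi: "brace_ideal A M J" and x: "x \<in> carrier A"
  shows "inv\<^bsub>A Mod J\<^esub> cs J x = cs J (inv\<^bsub>A\<^esub> x)"
proof -
  have "cs J x \<in> carrier (A Mod J)" using x carrier_quot by auto
  thus ?thesis unfolding cs_def using normal.inv_FactGroup[OF ideal_nA[OF bi]]
      normal.rcos_inv[OF ideal_nA[OF bi] x] by (simp add: cs_def)
qed

lemma quot_lam: assumes bi: "brace_ideal A M J" and x: "x \<in> carrier A" and y: "y \<in> carrier A"
  shows "brace_lambda (A Mod J) (M Mod J) (cs J x) (cs J y) = cs J (lam x y)"
  unfolding brace_lambda_def
  using quot_inv[OF bi x] quot_multM[OF bi x y] quot_mult[OF bi] x y by (simp add: lam_def')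

lemma socle_char: assumes bi: "brace_ideal A M J" and x: "x \<in> carrier A"
  shows "cs J x \<in> brace_socle (A Mod J) (M Mod J) \<longleftrightarrow> x \<in> socpre J"
proof -
  have "cs J x \<in> brace_socle (A Mod J) (M Mod J) \<longleftrightarrow>
     (\<forall>y\<in>carrier A. brace_lambda (A Mod J) (M Mod J) (cs J x) (cs J y) = cs J y) \<and>
     (\<forall>y\<in>carrier A. cs J x \<otimes>\<^bsub>A Mod J\<^esub> cs J y = cs J y \<otimes>\<^bsub>A Mod J\<^esub> cs J x)"
    unfolding brace_socle_def group_center_def carrier_quot using x by auto
  also have "\<dots> \<longleftrightarrow> x \<in> socpre J"
    unfolding socpre_def using quot_lam[OF bi x] quot_mult[OF bi] x by auto
  finally show ?thesis .
qed

lemma soc_step: assumes bi: "brace_ideal A M J"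
  shows "\<Union> (brace_socle (A Mod J) (M Mod J)) = socpre J"
proof
  show "\<Union> (brace_socle (A Mod J) (M Mod J)) \<subseteq> socpre J"
  proof
    fix z assume "z \<in> \<Union> (brace_socle (A Mod J) (M Mod J))"
    then obtain Xs where Xs: "Xs \<in> brace_socle (A Mod J) (M Mod J)" "z \<in> Xs" by auto
    have "Xs \<in> carrier (A Mod J)" using Xs(1) unfolding brace_socle_def by auto
    then obtain x where x: "x \<in> carrier A" "Xs = cs J x" using carrier_quot by auto
    have zc: "z \<in> carrier A" using Xs(2) x ideal_sub[OF bi] unfolding cs_def r_coset_def by auto
    have "cs J z = cs J x" using A.repr_independence[of z J x] Xs(2) x ideal_sA[OF bi]
      unfolding cs_def by simp
    hence "cs J z \<in> brace_socle (A Mod J) (M Mod J)" using Xs x by simp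
    thus "z \<in> socpre J" using socle_char[OF bi zc] by simp
  qed
next
  show "socpre J \<subseteq> \<Union> (brace_socle (A Mod J) (M Mod J))"
  proof
    fix z assume z: "z \<in> socpre J"
    have zc: "z \<in> carrier A" using z sp_sub by auto
    have "cs J z \<in> brace_socle (A Mod J) (M Mod J)" using socle_char[OF bi zc] z by simp
    moreover have "z \<in> cs J z" unfolding cs_def using A.rcos_self[OF zc ideal_sA[OF bi]] .
    ultimately show "z \<in> \<Union> (brace_socle (A Mod J) (M Mod J))" by blast
  qed
qed

lemma soc_series_facts: "brace_ideal A M (soc_series A M k) \<and>
   soc_series A M (Suc k) = socpre (soc_series A M k)"
proof (induction k)
  case 0
  have "brace_ideal A M (soc_series A M 0)" using one_ideal by simp
  then show ?case using soc_step by simp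
next
  case (Suc k)
  hence bi: "brace_ideal A M (soc_series A M (Suc k))" using sp_ideal by simp
  then show ?case using soc_step[OF bi] by simp
qed

end


lemma (in group) normal_restrict:
  assumes "N \<lhd> G" "subgroup H G" "N \<subseteq> H"
  shows "N \<lhd> G\<lparr>carrier := H\<rparr>"
  using normal_Int_subgroup[OF assms(2) assms(1)] assms(3) by (simp add: Int_absorb2)

lemma (in group) subquot_group:
  assumes "N \<lhd> G" "subgroup H G" "N \<subseteq> H"
  shows "group (G\<lparr>carrier := H\<rparr> Mod N)"
  using normal.factorgroup_is_group[OF normal_restrict[OF assms]] .

lemma carrier_subquot: "carrier (G\<lparr>carrier := H\<rparr> Mod N) = (\<lambda>x. N #>\<^bsub>G\<^esub> x) ` H"
  unfolding carrier_FactGroup by simp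

lemma mult_subquot: "U \<otimes>\<^bsub>G\<lparr>carrier := H\<rparr> Mod N\<^esub> V = U <#>\<^bsub>G\<^esub> V"
  by simp

context brace_loc begin

lemma factor_transfer:
  assumes bS: "brace_ideal A M S" and J: "J \<lhd> M" and K: "K \<lhd> M"
    and SJ: "S \<subseteq> J" and JK: "J \<subseteq> K" and Ks: "K \<subseteq> socpre S"
  shows "carrier (A\<lparr>carrier := K\<rparr> Mod J) = carrier (M\<lparr>carrier := K\<rparr> Mod J)"
    and "cyclic_group (A\<lparr>carrier := K\<rparr> Mod J) \<longleftrightarrow> cyclic_group (M\<lparr>carrier := K\<rparr> Mod J)"
    and "carrier (A\<lparr>carrier := K\<rparr> Mod J) \<subseteq> brace_socle (A Mod J) (M Mod J)"
proof -
  have bJ: "brace_ideal A M J" using lemmaA[OF bS J SJ] JK Ks by blast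
  have bK: "brace_ideal A M K" using lemmaA[OF bS K] SJ JK Ks by blast
  have Kc: "K \<subseteq> carrier A" using ideal_sub[OF bK] .
  have KsJ: "K \<subseteq> socpre J" using Ks sp_mono[OF bS bJ SJ] by blast
  have ceqQ: "carrier (A\<lparr>carrier := K\<rparr> Mod J) = carrier (M\<lparr>carrier := K\<rparr> Mod J)"
    unfolding carrier_subquot using rcos_MA[OF bJ] Kc by (auto simp: image_def)
  show "carrier (A\<lparr>carrier := K\<rparr> Mod J) = carrier (M\<lparr>carrier := K\<rparr> Mod J)" by (rule ceqQ)
  have gA: "group (A\<lparr>carrier := K\<rparr> Mod J)"
    using A.subquot_group[OF ideal_nA[OF bJ] ideal_sA[OF bK] JK] .
  have gM: "group (M\<lparr>carrier := K\<rparr> Mod J)"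
    using M.subquot_group[OF J ideal_sM[OF bK] JK] .
  have "id \<in> iso (A\<lparr>carrier := K\<rparr> Mod J) (M\<lparr>carrier := K\<rparr> Mod J)"
    unfolding iso_def
  proof (intro CollectI conjI)
    show "bij_betw id (carrier (A\<lparr>carrier := K\<rparr> Mod J)) (carrier (M\<lparr>carrier := K\<rparr> Mod J))"
      using ceqQ by simp
    show "id \<in> hom (A\<lparr>carrier := K\<rparr> Mod J) (M\<lparr>carrier := K\<rparr> Mod J)"
    proof (rule homI)
      fix Xs assume "Xs \<in> carrier (A\<lparr>carrier := K\<rparr> Mod J)"
      thus "id Xs \<in> carrier (M\<lparr>carrier := K\<rparr> Mod J)" using ceqQ by simp
    next
      fix Xs Ys assume Xs: "Xs \<in> carrier (A\<lparr>carrier := K\<rparr> Mod J)"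
        and Ys: "Ys \<in> carrier (A\<lparr>carrier := K\<rparr> Mod J)"
      obtain x where x: "x \<in> K" "Xs = cs J x" using Xs unfolding carrier_subquot cs_def by auto
      obtain y where y: "y \<in> K" "Ys = cs J y" using Ys unfolding carrier_subquot cs_def by auto
      have xc: "x \<in> carrier A" and yc: "y \<in> carrier A" using x y Kc by auto
      have "Xs \<otimes>\<^bsub>A\<lparr>carrier := K\<rparr> Mod J\<^esub> Ys = cs J (x \<otimes>\<^bsub>A\<^esub> y)"
        using quot_mult[OF bJ xc yc] x y by simp
      also have "\<dots> = cs J (x \<otimes>\<^bsub>M\<^esub> y)" using sp_mult_cs[OF bJ _ yc, of x] x KsJ by auto
      also have "\<dots> = Xs \<otimes>\<^bsub>M\<lparr>carrier := K\<rparr> Mod J\<^esub> Ys"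
        using quot_multM[OF bJ xc yc] x y by simp
      finally show "id (Xs \<otimes>\<^bsub>A\<lparr>carrier := K\<rparr> Mod J\<^esub> Ys) =
          id Xs \<otimes>\<^bsub>M\<lparr>carrier := K\<rparr> Mod J\<^esub> id Ys" by simp
    qed
  qed
  hence "A\<lparr>carrier := K\<rparr> Mod J \<cong> M\<lparr>carrier := K\<rparr> Mod J" by (rule is_isoI)
  thus "cyclic_group (A\<lparr>carrier := K\<rparr> Mod J) \<longleftrightarrow> cyclic_group (M\<lparr>carrier := K\<rparr> Mod J)"
    using isomorphic_group_cyclicity gA gM by blast
  show "carrier (A\<lparr>carrier := K\<rparr> Mod J) \<subseteq> brace_socle (A Mod J) (M Mod J)"
  proof
    fix Xs assume "Xs \<in> carrier (A\<lparr>carrier := K\<rparr> Mod J)"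
    then obtain x where x: "x \<in> K" "Xs = cs J x" unfolding carrier_subquot cs_def by auto
    thus "Xs \<in> brace_socle (A Mod J) (M Mod J)" using socle_char[OF bJ, of x] KsJ Kc by auto
  qed
qed

end


definition chainP :: "('s \<Rightarrow> bool) \<Rightarrow> ('s \<Rightarrow> 's \<Rightarrow> bool) \<Rightarrow> 's \<Rightarrow> 's \<Rightarrow> (nat \<Rightarrow> 's) \<Rightarrow> nat \<Rightarrow> bool"
  where "chainP R T P Q C m \<longleftrightarrow> C 0 = P \<and> C m = Q \<and> (\<forall>i\<le>m. R (C i)) \<and> (\<forall>i<m. T (C i) (C (Suc i)))"

lemma chain_triv: "R P \<Longrightarrow> chainP R T P P (\<lambda>_. P) 0"
  unfolding chainP_def by auto

lemma chain_one: "R P \<Longrightarrow> R Q \<Longrightarrow> T P Q \<Longrightarrow> chainP R T P Q (\<lambda>i. if i = 0 then P else Q) 1"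
  unfolding chainP_def by auto

lemma chain_concat:
  assumes c1: "chainP R T P Q C1 m1" and c2: "chainP R T Q Z C2 m2"
  shows "chainP R T P Z (\<lambda>i. if i \<le> m1 then C1 i else C2 (i - m1)) (m1 + m2)"
  unfolding chainP_def
proof (intro conjI allI impI)
  show "(if 0 \<le> m1 then C1 0 else C2 (0 - m1)) = P" using c1 unfolding chainP_def by simp
  show "(if m1 + m2 \<le> m1 then C1 (m1 + m2) else C2 (m1 + m2 - m1)) = Z"
    using c1 c2 unfolding chainP_def by auto
  fix i
  show "i \<le> m1 + m2 \<Longrightarrow> R (if i \<le> m1 then C1 i else C2 (i - m1))"
    using c1 c2 unfolding chainP_def by auto
  assume i: "i < m1 + m2"
  show "T (if i \<le> m1 then C1 i else C2 (i - m1)) (if Suc i \<le> m1 then C1 (Suc i) else C2 (Suc i - m1))"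
  proof (cases "i < m1")
    case True thus ?thesis using c1 unfolding chainP_def by auto
  next
    case False
    hence "Suc i - m1 = Suc (i - m1)" "i - m1 < m2" using i by auto
    moreover have "(if i \<le> m1 then C1 i else C2 (i - m1)) = C2 (i - m1)"
      using False c1 c2 unfolding chainP_def by (cases "i = m1") auto
    ultimately show ?thesis using c2 False unfolding chainP_def by auto
  qed
qed

lemma chain_bounds:
  assumes c: "chainP R T P Q C m" and TT: "\<And>U V. T U V \<Longrightarrow> U \<subseteq> V" and i: "i \<le> m"
  shows "P \<subseteq> C i \<and> C i \<subseteq> Q"
proof -
  have step: "C k \<subseteq> C (Suc k)" if "k < m" for k
    using that c TT unfolding chainP_def by blast
  have mono: "C j \<subseteq> C (j + d)" if "j + d \<le> m" for j d
    using that
  proof (induction d)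
    case 0 thus ?case by simp
  next
    case (Suc d)
    hence "C j \<subseteq> C (j + d)" by simp
    moreover have "C (j + d) \<subseteq> C (Suc (j + d))" using step Suc.prems by simp
    ultimately show ?case by simp
  qed
  have "C 0 \<subseteq> C i" using mono[of 0 i] i by simp
  moreover have "C i \<subseteq> C m" using mono[of i "m - i"] i by simp
  ultimately show ?thesis using c unfolding chainP_def by simp
qed

definition gR :: "('a, 'b) monoid_scheme \<Rightarrow> 'a set \<Rightarrow> bool" where "gR G U \<longleftrightarrow> U \<lhd> G"
definition gT :: "('a, 'b) monoid_scheme \<Rightarrow> 'a set \<Rightarrow> 'a set \<Rightarrow> bool" where
  "gT G U V \<longleftrightarrow> U \<subseteq> V \<and> cyclic_group (G\<lparr>carrier := V\<rparr> Mod U) \<and>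
     (infinite (carrier (G\<lparr>carrier := V\<rparr> Mod U)) \<or> Factorial_Ring.prime (card (carrier (G\<lparr>carrier := V\<rparr> Mod U))))"

context group begin

lemma subgroup_cyclic:
  assumes g: "g \<in> carrier G" and gen: "carrier G = range (\<lambda>n::int. g [^] n)" and U: "subgroup U G"
  shows "cyclic_group (G\<lparr>carrier := U\<rparr>)"
proof -
  have gU: "group (G\<lparr>carrier := U\<rparr>)" using subgroup_imp_group[OF U] .
  have Uc: "U \<subseteq> carrier G" using subgroup.subset[OF U] .
  have ex: "\<exists>u\<in>U. U = range (\<lambda>n::int. u [^] n)"
  proof (cases "U = {\<one>}")
    case True thus ?thesis by auto
  next
    case False
    then obtain y where y: "y \<in> U" "y \<noteq> \<one>" using subgroup.one_closed[OF U] by blast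
    have "y \<in> range (\<lambda>n::int. g [^] n)" using gen y Uc by blast
    then obtain k :: int where k: "y = g [^] k" by blast
    have k0: "k \<noteq> 0" using k y by auto
    have "\<exists>n::nat. 0 < n \<and> g [^] int n \<in> U"
    proof (cases "k > 0")
      case True thus ?thesis using k y by (intro exI[of _ "nat k"]) auto
    next
      case False
      have "inv y \<in> U" by (rule subgroup.m_inv_closed[OF U y(1)])
      moreover have "g [^] (- k) = inv y" using int_pow_neg[OF g, of k] k by simp
      ultimately have "g [^] (- k) \<in> U" by simp
      thus ?thesis using False k0 by (intro exI[of _ "nat (- k)"]) auto
    qed
    define d where "d = (LEAST n::nat. 0 < n \<and> g [^] int n \<in> U)"
    have d: "0 < d" "g [^] int d \<in> U" using LeastI_ex[OF \<open>\<exists>n::nat. 0 < n \<and> g [^] int n \<in> U\<close>]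
      unfolding d_def by auto
    have dmin: "\<not> (0 < n \<and> g [^] int n \<in> U)" if "n < d" for n
      using not_less_Least[of n "\<lambda>n::nat. 0 < n \<and> g [^] int n \<in> U"] that unfolding d_def by blast
    define u where "u = g [^] int d"
    have "U = range (\<lambda>n::int. u [^] n)"
    proof
      show "range (\<lambda>n::int. u [^] n) \<subseteq> U"
        using subgroup_int_pow_closed[OF U] d unfolding u_def by auto
    next
      show "U \<subseteq> range (\<lambda>n::int. u [^] n)"
      proof
        fix z assume z: "z \<in> U"
        have "z \<in> range (\<lambda>n::int. g [^] n)" using gen z Uc by blast
        then obtain j :: int where j: "z = g [^] j" by blast
        define q where "q = j div int d"
        define r where "r = j mod int d"
        have jqr: "j = int d * q + r" unfolding q_def r_def by simp
        have r: "0 \<le> r" "r < int d" unfolding r_def using d by auto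
        have uq: "u [^] q = g [^] (int d * q)" unfolding u_def using int_pow_pow[OF g] by simp
        have uqU: "u [^] q \<in> U" using subgroup_int_pow_closed[OF U] d unfolding u_def by auto
        have "z = u [^] q \<otimes> g [^] r" using j jqr uq int_pow_mult[OF g] by simp
        hence "inv (u [^] q) \<otimes> z = inv (u [^] q) \<otimes> (u [^] q \<otimes> g [^] r)" by simp
        also have "\<dots> = g [^] r" using uqU Uc g by (simp add: m_assoc[symmetric] subsetD)
        finally have "g [^] r = inv (u [^] q) \<otimes> z" by simp
        hence grU: "g [^] r \<in> U" using uqU z subgroup.m_inv_closed[OF U] subgroup.m_closed[OF U] by simp
        have "r = 0"
        proof (rule ccontr)
          assume "r \<noteq> 0"
          hence "0 < nat r" "nat r < d" using r by auto
          moreover have "g [^] int (nat r) \<in> U" using grU r by simp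
          ultimately show False using dmin by blast
        qed
        hence "z = u [^] q" using j jqr uq by simp
        thus "z \<in> range (\<lambda>n::int. u [^] n)" by auto
      qed
    qed
    moreover have "u \<in> U" using d(2) unfolding u_def by simp
    ultimately show ?thesis by blast
  qed
  then obtain u where u: "u \<in> U" "U = range (\<lambda>n::int. u [^] n)" by blast
  have e1: "range (\<lambda>n::int. u [^] n) = range (\<lambda>n::int. u [^]\<^bsub>G\<lparr>carrier := U\<rparr>\<^esub> n)"
    using int_pow_consistent[OF U u(1)] by simp
  have "carrier (G\<lparr>carrier := U\<rparr>) = U" by simp
  also have "\<dots> = range (\<lambda>n::int. u [^] n)" by (rule u(2))
  also have "\<dots> = range (\<lambda>n::int. u [^]\<^bsub>G\<lparr>carrier := U\<rparr>\<^esub> n)" by (rule e1)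
  finally have e2: "carrier (G\<lparr>carrier := U\<rparr>) = range (\<lambda>n::int. u [^]\<^bsub>G\<lparr>carrier := U\<rparr>\<^esub> n)" .
  have u1: "u \<in> carrier (G\<lparr>carrier := U\<rparr>)" using u(1) by simp
  show ?thesis unfolding group.cyclic_group[OF gU] using u1 e2 by blast
qed

lemma cyc_crit:
  assumes K: "K \<lhd> G" and H: "subgroup H G" and KH: "K \<subseteq> H"
    and W: "subgroup W G" "W \<subseteq> H"
    and C: "group C" "cyclic_group C"
    and f: "\<And>x. x \<in> W \<Longrightarrow> f x \<in> carrier C" "\<And>x y. x \<in> W \<Longrightarrow> y \<in> W \<Longrightarrow> f (x \<otimes> y) = f x \<otimes>\<^bsub>C\<^esub> f y"
    and fk: "\<And>x y. x \<in> W \<Longrightarrow> y \<in> W \<Longrightarrow> f x = f y \<Longrightarrow> K #> x = K #> y"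
    and sj: "\<And>x. x \<in> H \<Longrightarrow> \<exists>w\<in>W. K #> x = K #> w"
  shows "cyclic_group (G\<lparr>carrier := H\<rparr> Mod K)"
proof -
  interpret C: group C by (rule C(1))
  have Wc: "W \<subseteq> carrier G" using subgroup.subset[OF W(1)] .
  have f1: "f \<one> = \<one>\<^bsub>C\<^esub>"
  proof -
    have "f (\<one> \<otimes> \<one>) = f \<one> \<otimes>\<^bsub>C\<^esub> f \<one>" using f(2)[of \<one> \<one>] subgroup.one_closed[OF W(1)] by blast
    hence "f \<one> \<otimes>\<^bsub>C\<^esub> f \<one> = f \<one>" by (metis l_one one_closed)
    thus ?thesis using f(1)[OF subgroup.one_closed[OF W(1)]] C.l_cancel_one by blast
  qed
  have finv: "f (inv x) = inv\<^bsub>C\<^esub> f x" if x: "x \<in> W" for x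
  proof -
    have ix: "inv x \<in> W" using subgroup.m_inv_closed[OF W(1) x] .
    have "inv x \<otimes> x = \<one>" using x Wc by auto
    hence "f (inv x) \<otimes>\<^bsub>C\<^esub> f x = \<one>\<^bsub>C\<^esub>" using f(2)[OF ix x] f1 by metis
    thus ?thesis using C.inv_equality f(1) x ix by metis
  qed
  define U where "U = f ` W"
  have U: "subgroup U C"
  proof (rule C.subgroupI)
    show "U \<subseteq> carrier C" using f(1) unfolding U_def by auto
    show "U \<noteq> {}" using subgroup.one_closed[OF W(1)] unfolding U_def by auto
    fix a assume "a \<in> U" then obtain x where "x \<in> W" "a = f x" unfolding U_def by auto
    thus "inv\<^bsub>C\<^esub> a \<in> U" using finv subgroup.m_inv_closed[OF W(1)] unfolding U_def by force
  next
    fix a b assume "a \<in> U" "b \<in> U"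
    then obtain x y where "x \<in> W" "a = f x" "y \<in> W" "b = f y" unfolding U_def by auto
    thus "a \<otimes>\<^bsub>C\<^esub> b \<in> U" using f(2) subgroup.m_closed[OF W(1)] unfolding U_def by force
  qed
  obtain g where g: "g \<in> carrier C" "carrier C = range (\<lambda>n::int. g [^]\<^bsub>C\<^esub> n)"
    using C(2) C.cyclic_group by blast
  have cU: "cyclic_group (C\<lparr>carrier := U\<rparr>)" using C.subgroup_cyclic[OF g U] .
  have gU: "group (C\<lparr>carrier := U\<rparr>)" using C.subgroup_imp_group[OF U] .
  have gQ: "group (G\<lparr>carrier := H\<rparr> Mod K)" using subquot_group[OF K H KH] .
  define h where "h u = K #> (SOME w. w \<in> W \<and> f w = u)" for u
  have hf: "h (f w) = K #> w" if w: "w \<in> W" for w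
  proof -
    have "\<exists>w'. w' \<in> W \<and> f w' = f w" using w by blast
    hence "(SOME w'. w' \<in> W \<and> f w' = f w) \<in> W \<and> f (SOME w'. w' \<in> W \<and> f w' = f w) = f w"
      by (rule someI_ex)
    thus ?thesis unfolding h_def using fk w by blast
  qed
  have "h \<in> epi (C\<lparr>carrier := U\<rparr>) (G\<lparr>carrier := H\<rparr> Mod K)"
    unfolding epi_def
  proof (intro CollectI conjI)
    show "h \<in> hom (C\<lparr>carrier := U\<rparr>) (G\<lparr>carrier := H\<rparr> Mod K)"
    proof (rule homI)
      fix a assume "a \<in> carrier (C\<lparr>carrier := U\<rparr>)"
      then obtain x where x: "x \<in> W" "a = f x" unfolding U_def by auto
      thus "h a \<in> carrier (G\<lparr>carrier := H\<rparr> Mod K)" using hf W(2) unfolding carrier_subquot by auto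
    next
      fix a b assume "a \<in> carrier (C\<lparr>carrier := U\<rparr>)" "b \<in> carrier (C\<lparr>carrier := U\<rparr>)"
      then obtain x y where x: "x \<in> W" "a = f x" and y: "y \<in> W" "b = f y" unfolding U_def by auto
      have "h (a \<otimes>\<^bsub>C\<lparr>carrier := U\<rparr>\<^esub> b) = h (f (x \<otimes> y))" using x y f(2) by simp
      also have "\<dots> = K #> (x \<otimes> y)" using hf subgroup.m_closed[OF W(1) x(1) y(1)] by blast
      also have "\<dots> = (K #> x) <#> (K #> y)" using normal.rcos_sum[OF K] x y Wc by auto
      also have "\<dots> = h a \<otimes>\<^bsub>G\<lparr>carrier := H\<rparr> Mod K\<^esub> h b" using x y hf by simp
      finally show "h (a \<otimes>\<^bsub>C\<lparr>carrier := U\<rparr>\<^esub> b) = h a \<otimes>\<^bsub>G\<lparr>carrier := H\<rparr> Mod K\<^esub> h b" .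
    qed
    show "h ` carrier (C\<lparr>carrier := U\<rparr>) = carrier (G\<lparr>carrier := H\<rparr> Mod K)"
    proof
      show "h ` carrier (C\<lparr>carrier := U\<rparr>) \<subseteq> carrier (G\<lparr>carrier := H\<rparr> Mod K)"
        using hf W(2) unfolding carrier_subquot U_def by auto
    next
      show "carrier (G\<lparr>carrier := H\<rparr> Mod K) \<subseteq> h ` carrier (C\<lparr>carrier := U\<rparr>)"
      proof
        fix Z assume "Z \<in> carrier (G\<lparr>carrier := H\<rparr> Mod K)"
        then obtain x where x: "x \<in> H" "Z = K #> x" unfolding carrier_subquot by auto
        then obtain w where w: "w \<in> W" "K #> x = K #> w" using sj by blast
        thus "Z \<in> h ` carrier (C\<lparr>carrier := U\<rparr>)" using x hf unfolding U_def by force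
      qed
    qed
  qed
  thus ?thesis using group.cyclic_group_epimorphic_image[OF gU _ cU gQ] by blast
qed

end


context group begin

lemma sub_nat_pow_closed: "subgroup H G \<Longrightarrow> x \<in> H \<Longrightarrow> x [^] (n::nat) \<in> H"
  by (induction n) (auto simp: subgroup.one_closed subgroup.m_closed)

lemma inv_cancel_l: "b \<in> carrier G \<Longrightarrow> z \<in> carrier G \<Longrightarrow> inv b \<otimes> (b \<otimes> z) = z"
  by (simp add: m_assoc[symmetric])

lemma conj_pow: "b \<in> carrier G \<Longrightarrow> x \<in> carrier G \<Longrightarrow>
   (b \<otimes> x \<otimes> inv b) [^] (k::nat) = b \<otimes> x [^] k \<otimes> inv b"
proof (induction k)
  case 0 thus ?case by simp
next
  case (Suc k)
  have "(b \<otimes> x \<otimes> inv b) [^] Suc k = (b \<otimes> x [^] k \<otimes> inv b) \<otimes> (b \<otimes> x \<otimes> inv b)"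
    using Suc by simp
  also have "\<dots> = b \<otimes> (x [^] k \<otimes> x) \<otimes> inv b" using Suc.prems by (simp add: m_assoc inv_cancel_l)
  finally show ?case by simp
qed

lemma set_mult_absorb: "subgroup L G \<Longrightarrow> P \<subseteq> L \<Longrightarrow> P \<noteq> {} \<Longrightarrow> L <#> P = L"
proof -
  assume L: "subgroup L G" and PL: "P \<subseteq> L" and Pn: "P \<noteq> {}"
  show "L <#> P = L"
  proof
    show "L <#> P \<subseteq> L" unfolding set_mult_def using PL subgroup.m_closed[OF L] by blast
  next
    show "L \<subseteq> L <#> P"
    proof
      fix l assume l: "l \<in> L"
      obtain p where p: "p \<in> P" using Pn by blast
      have pc: "p \<in> carrier G" "l \<in> carrier G" using p l PL subgroup.subset[OF L] by auto
      have "l = (l \<otimes> inv p) \<otimes> p" using pc by (simp add: m_assoc)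
      moreover have "l \<otimes> inv p \<in> L" using l p PL subgroup.m_closed[OF L] subgroup.m_inv_closed[OF L] by blast
      ultimately show "l \<in> L <#> P" unfolding set_mult_def using p by blast
    qed
  qed
qed

lemma refine_fin:
  "finite (carrier (G\<lparr>carrier := Q\<rparr> Mod P)) \<Longrightarrow> card (carrier (G\<lparr>carrier := Q\<rparr> Mod P)) = n \<Longrightarrow>
   P \<lhd> G \<Longrightarrow> Q \<lhd> G \<Longrightarrow> P \<subseteq> Q \<Longrightarrow> cyclic_group (G\<lparr>carrier := Q\<rparr> Mod P) \<Longrightarrow>
   \<exists>C m. chainP (gR G) (gT G) P Q C m"
proof (induction n arbitrary: P Q rule: less_induct)
  case (less n P Q)
  note fin = less.prems(1) and cardn = less.prems(2) and P = less.prems(3) and Q = less.prems(4)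
    and PQ = less.prems(5) and cyc = less.prems(6)
  define F where "F = G\<lparr>carrier := Q\<rparr> Mod P"
  have sQ: "subgroup Q G" using Q normal_imp_subgroup by blast
  have sP: "subgroup P G" using P normal_imp_subgroup by blast
  have Pc: "P \<subseteq> carrier G" using subgroup.subset[OF sP] .
  have Qc: "Q \<subseteq> carrier G" using subgroup.subset[OF sQ] .
  have gF: "group F" unfolding F_def using subquot_group[OF P sQ PQ] .
  interpret F: group F by (rule gF)
  define phi where "phi x = P #> x" for x
  have phiF: "phi x \<in> carrier F" if "x \<in> Q" for x
    using that unfolding phi_def F_def carrier_subquot by blast
  have carF: "carrier F = phi ` Q" unfolding phi_def F_def carrier_subquot by simp
  have phimult: "phi (x \<otimes> y) = phi x \<otimes>\<^bsub>F\<^esub> phi y" if "x \<in> Q" "y \<in> Q" for x y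
    using normal.rcos_sum[OF P, of x y] that Qc unfolding phi_def F_def by auto
  have oneF: "\<one>\<^bsub>F\<^esub> = P" unfolding F_def by simp
  have phi1: "phi x = \<one>\<^bsub>F\<^esub> \<longleftrightarrow> x \<in> P" if "x \<in> Q" for x
    using rcos_eq_one_iff[OF sP, of x] rcos_one[OF sP] that Qc oneF unfolding phi_def by auto
  have phieq: "phi x = phi y \<longleftrightarrow> x \<otimes> inv y \<in> P" if "x \<in> Q" "y \<in> Q" for x y
    using rcos_eq_iff[OF sP, of x y] that Qc unfolding phi_def by auto
  have phipow: "phi (x [^] (k::nat)) = phi x [^]\<^bsub>F\<^esub> k" if x: "x \<in> Q" for x k
  proof (induction k)
    case 0 thus ?case using phi1 subgroup.one_closed[OF sQ] subgroup.one_closed[OF sP] by simp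
  next
    case (Suc k)
    have "x [^] k \<in> Q" using x sub_nat_pow_closed[OF sQ] by blast
    thus ?case using Suc phimult[of "x [^] k" x] x by simp
  qed
  have phione: "phi \<one> = P" unfolding phi_def using Pc by simp
  have PF: "P \<in> carrier F" using phiF[OF subgroup.one_closed[OF sQ]] unfolding phione .
  have finF: "finite (carrier F)" using fin unfolding F_def .
  have cardF: "card (carrier F) = n" using cardn unfolding F_def .
  have "carrier F \<noteq> {}" using PF by blast
  hence npos: "n > 0" using finF cardF card_gt_0_iff by metis
  show ?case
  proof (cases "n = 1")
    case True
    have "Q \<subseteq> P"
    proof
      fix x assume x: "x \<in> Q"
      have "carrier F = {P}" using cardn True PF unfolding F_def[symmetric]
        by (metis card_1_singletonE singletonD)
      hence "phi x = \<one>\<^bsub>F\<^esub>" using phiF[OF x] oneF by simp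
      thus "x \<in> P" using phi1 x by blast
    qed
    hence "Q = P" using PQ by blast
    thus ?thesis using chain_triv[of "gR G" P "gT G"] P unfolding gR_def by auto
  next
    case n1: False
    show ?thesis
    proof (cases "Factorial_Ring.prime n")
      case True
      have "gT G P Q" unfolding gT_def using PQ cyc True cardn by simp
      thus ?thesis using chain_one[of "gR G" P Q "gT G"] P Q unfolding gR_def by blast
    next
      case np: False
      have "n > 1" using npos n1 by simp
      then obtain d where d: "d dvd n" "d \<noteq> 1" "d \<noteq> n" using np prime_nat_iff by blast
      define e where "e = n div d"
      have d0: "d > 0" using d npos by (metis dvd_0_left_iff gr0I less_not_refl)
      have de: "n = d * e" unfolding e_def using d by simp
      have dlt: "1 < d" "d < n" using d d0 npos dvd_imp_le by (auto simp: le_neq_implies_less)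
      have elt2: "e < n" unfolding e_def using dlt npos by (simp add: div_less_dividend)
      have elt1: "1 < e"
      proof (rule ccontr)
        assume "\<not> 1 < e"
        hence "e \<le> 1" by simp
        hence "d * e \<le> d" by (simp add: mult_le_cancel1)
        thus False using de dlt by simp
      qed
      note elt = elt1 elt2
      obtain Xg where Xg: "Xg \<in> carrier F" "subgroup_generated F {Xg} = F"
        using cyc unfolding F_def[symmetric] cyclic_group_def by blast
      have "generate F {Xg} = carrier F"
        using carrier_subgroup_generated[of F "{Xg}"] Xg by (metis Int_absorb1 empty_subsetI insert_subset)
      hence ordX: "F.ord Xg = n" using F.generate_pow_card[OF Xg(1)] cardn unfolding F_def by simp
      obtain g where g: "g \<in> Q" "Xg = phi g" using Xg(1) carF by blast
      have commF: "comm_group F" using F.cyclic_imp_abelian_group cyc unfolding F_def by blast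
      define L where "L = {x \<in> Q. phi x [^]\<^bsub>F\<^esub> e = \<one>\<^bsub>F\<^esub>}"
      have LQ: "L \<subseteq> Q" unfolding L_def by blast
      have PL: "P \<subseteq> L"
      proof
        fix x assume x: "x \<in> P"
        hence xQ: "x \<in> Q" using PQ by blast
        have "phi x = \<one>\<^bsub>F\<^esub>" using phi1[OF xQ] x by simp
        thus "x \<in> L" unfolding L_def using xQ by simp
      qed
      have Lchar: "x \<in> L \<longleftrightarrow> x [^] e \<in> P" if xQ: "x \<in> Q" for x
      proof -
        have "x \<in> L \<longleftrightarrow> phi x [^]\<^bsub>F\<^esub> e = \<one>\<^bsub>F\<^esub>" unfolding L_def using xQ by blast
        also have "\<dots> \<longleftrightarrow> phi (x [^] e) = \<one>\<^bsub>F\<^esub>" using phipow[OF xQ] by metis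
        also have "\<dots> \<longleftrightarrow> x [^] e \<in> P" using phi1 sub_nat_pow_closed[OF sQ xQ] by blast
        finally show ?thesis .
      qed
      have sL: "subgroup L G"
      proof (rule subgroupI)
        show "L \<subseteq> carrier G" using LQ Qc by blast
        show "L \<noteq> {}" using PL subgroup.one_closed[OF sP] by blast
      next
        fix a assume a: "a \<in> L"
        have aQ: "a \<in> Q" using a LQ by blast
        have iaQ: "inv a \<in> Q" using subgroup.m_inv_closed[OF sQ aQ] .
        have "phi (inv a) \<otimes>\<^bsub>F\<^esub> phi a = \<one>\<^bsub>F\<^esub>"
          using phimult[OF iaQ aQ] phi1 aQ Qc subgroup.one_closed[OF sP] subgroup.one_closed[OF sQ]
          by (metis l_inv subsetD)
        hence "phi (inv a) = inv\<^bsub>F\<^esub> phi a" using F.inv_equality phiF aQ iaQ by metis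
        hence "phi (inv a) [^]\<^bsub>F\<^esub> e = inv\<^bsub>F\<^esub> (phi a [^]\<^bsub>F\<^esub> e)"
          using F.nat_pow_inv phiF aQ by simp
        also have "\<dots> = \<one>\<^bsub>F\<^esub>" using a unfolding L_def by simp
        finally show "inv a \<in> L" unfolding L_def using iaQ by blast
      next
        fix a b assume a: "a \<in> L" and b: "b \<in> L"
        have aQ: "a \<in> Q" and bQ: "b \<in> Q" using a b LQ by auto
        have "phi (a \<otimes> b) [^]\<^bsub>F\<^esub> e = (phi a \<otimes>\<^bsub>F\<^esub> phi b) [^]\<^bsub>F\<^esub> e" using phimult aQ bQ by simp
        also have "\<dots> = phi a [^]\<^bsub>F\<^esub> e \<otimes>\<^bsub>F\<^esub> phi b [^]\<^bsub>F\<^esub> e"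
          using F.pow_mult_distrib[OF comm_monoid.m_comm[OF comm_group.axioms(1)[OF commF]]] phiF aQ bQ by blast
        also have "\<dots> = \<one>\<^bsub>F\<^esub>" using a b unfolding L_def by simp
        finally show "a \<otimes> b \<in> L" unfolding L_def using subgroup.m_closed[OF sQ aQ bQ] by blast
      qed
      have nL: "L \<lhd> G" unfolding normal_inv_iff
      proof (intro conjI sL ballI)
        fix b x assume b: "b \<in> carrier G" and x: "x \<in> L"
        have xQ: "x \<in> Q" using x LQ by blast
        have yQ: "b \<otimes> x \<otimes> inv b \<in> Q" using Q b xQ unfolding normal_inv_iff by blast
        have "x [^] e \<in> P" using Lchar xQ x by blast
        hence "b \<otimes> x [^] e \<otimes> inv b \<in> P" using P b unfolding normal_inv_iff by blast
        hence "(b \<otimes> x \<otimes> inv b) [^] e \<in> P" using conj_pow b xQ Qc by auto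
        thus "b \<otimes> x \<otimes> inv b \<in> L" using Lchar yQ by blast
      qed
      define gd where "gd = g [^] d"
      have gdQ: "gd \<in> Q" unfolding gd_def using sub_nat_pow_closed[OF sQ g(1)] .
      have XgC: "Xg \<in> carrier F" using Xg(1) .
      have phigd: "phi gd = Xg [^]\<^bsub>F\<^esub> d" unfolding gd_def using phipow g by simp
      have gdL: "gd \<in> L"
      proof -
        have "phi gd [^]\<^bsub>F\<^esub> e = Xg [^]\<^bsub>F\<^esub> (d * e)" using phigd F.nat_pow_pow XgC by simp
        also have "\<dots> = \<one>\<^bsub>F\<^esub>" using de ordX F.pow_ord_eq_1[OF XgC] by simp
        finally show ?thesis unfolding L_def using gdQ by blast
      qed
      have gdP: "gd \<notin> P"
      proof
        assume "gd \<in> P"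
        hence "Xg [^]\<^bsub>F\<^esub> d = \<one>\<^bsub>F\<^esub>" using phi1[OF gdQ] phigd by simp
        hence "n dvd d" using F.pow_eq_id[OF XgC] ordX by simp
        thus False using dlt d0 by (simp add: nat_dvd_not_less)
      qed
      have gL: "g \<notin> L"
      proof
        assume "g \<in> L"
        hence "Xg [^]\<^bsub>F\<^esub> e = \<one>\<^bsub>F\<^esub>" using g unfolding L_def by simp
        hence "n dvd e" using F.pow_eq_id[OF XgC] ordX by simp
        thus False using elt by (simp add: nat_dvd_not_less)
      qed
      have carPL: "carrier (G\<lparr>carrier := L\<rparr> Mod P) = phi ` L" unfolding phi_def carrier_subquot by simp
      have sub1: "phi ` L \<subset> carrier F"
      proof
        show "phi ` L \<subseteq> carrier F" using carF LQ by blast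
        show "phi ` L \<noteq> carrier F"
        proof
          assume eqc: "phi ` L = carrier F"
          have "phi g \<in> phi ` L" unfolding eqc using XgC g(2) by simp
          then obtain y where y: "y \<in> L" "phi g = phi y" by blast
          have yQ: "y \<in> Q" using y LQ by blast
          have gc: "g \<in> carrier G" and yc: "y \<in> carrier G" using g(1) yQ Qc by auto
          have "g \<otimes> inv y \<in> L" using phieq[OF g(1) yQ] y PL by blast
          hence "(g \<otimes> inv y) \<otimes> y \<in> L" using subgroup.m_closed[OF sL] y by blast
          moreover have "(g \<otimes> inv y) \<otimes> y = g" using gc yc by (simp add: m_assoc)
          ultimately have "g \<in> L" by simp
          thus False using gL by blast
        qed
      qed
      have c1: "card (carrier (G\<lparr>carrier := L\<rparr> Mod P)) < n"
      proof -
        have "card (phi ` L) < card (carrier F)" by (rule psubset_card_mono[OF finF sub1])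
        thus ?thesis unfolding carPL cardF .
      qed
      have f1: "finite (carrier (G\<lparr>carrier := L\<rparr> Mod P))"
        unfolding carPL using sub1 finF finite_subset by blast
      have cycF: "cyclic_group F" using cyc unfolding F_def .
      have cy1: "cyclic_group (G\<lparr>carrier := L\<rparr> Mod P)"
      proof (rule cyc_crit[OF P sL PL sL subset_refl gF cycF])
        show "phi x \<in> carrier F" if "x \<in> L" for x using phiF that LQ by blast
        show "phi (x \<otimes> y) = phi x \<otimes>\<^bsub>F\<^esub> phi y" if "x \<in> L" "y \<in> L" for x y
          using phimult that LQ by blast
        show "P #> x = P #> y" if "x \<in> L" "y \<in> L" "phi x = phi y" for x y
          using that unfolding phi_def by simp
        show "\<exists>w\<in>L. P #> x = P #> w" if "x \<in> L" for x using that by blast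
      qed
      obtain C1 m1 where ch1: "chainP (gR G) (gT G) P L C1 m1"
        using less.IH[OF c1 f1 refl P nL PL cy1] by blast
      define psi where "psi Y = L <#> Y" for Y
      have LP: "L <#> P = L" using set_mult_absorb[OF sL PL] subgroup.one_closed[OF sP] by blast
      have psiphi: "psi (phi x) = L #> x" if "x \<in> Q" for x
      proof -
        have xc: "x \<in> carrier G" using that Qc by blast
        have "psi (phi x) = (L <#> P) #> x" unfolding psi_def phi_def
          using setmult_rcos_assoc[of L P x] LQ Qc Pc xc by blast
        thus ?thesis unfolding LP .
      qed
      have carLQ: "carrier (G\<lparr>carrier := Q\<rparr> Mod L) = psi ` carrier F"
      proof -
        have "carrier (G\<lparr>carrier := Q\<rparr> Mod L) = (\<lambda>x. L #> x) ` Q" by (rule carrier_subquot)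
        also have "\<dots> = (\<lambda>x. psi (phi x)) ` Q" using psiphi by (simp cong: image_cong)
        also have "\<dots> = psi ` carrier F" unfolding carF by (simp add: image_image)
        finally show ?thesis .
      qed
      have one_Q: "\<one> \<in> Q" using subgroup.one_closed[OF sQ] .
      have ninj: "\<not> inj_on psi (carrier F)"
      proof
        assume inj: "inj_on psi (carrier F)"
        have gdc: "gd \<in> carrier G" using gdQ Qc by blast
        have "L #> gd = L #> \<one>" using rcos_eq_one_iff[OF sL gdc] gdL by blast
        hence "psi (phi gd) = psi (phi \<one>)" using psiphi[OF gdQ] psiphi[OF one_Q] by simp
        hence "phi gd = phi \<one>" using inj phiF[OF gdQ] phiF[OF one_Q] unfolding inj_on_def by blast
        hence "phi gd = \<one>\<^bsub>F\<^esub>" using phione oneF by simp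
        thus False using phi1[OF gdQ] gdP by blast
      qed
      have c2: "card (carrier (G\<lparr>carrier := Q\<rparr> Mod L)) < n"
      proof -
        have "card (psi ` carrier F) \<le> card (carrier F)" using card_image_le finF by blast
        moreover have "card (psi ` carrier F) \<noteq> card (carrier F)" using ninj inj_on_iff_eq_card finF by blast
        ultimately have "card (psi ` carrier F) < card (carrier F)" by simp
        thus ?thesis unfolding carLQ cardF .
      qed
      have f2: "finite (carrier (G\<lparr>carrier := Q\<rparr> Mod L))" unfolding carLQ using finF by simp
      have cy2: "cyclic_group (G\<lparr>carrier := Q\<rparr> Mod L)"
      proof (rule cyc_crit[OF nL sQ LQ sQ subset_refl gF cycF])
        show "phi x \<in> carrier F" if "x \<in> Q" for x using phiF that by blast
        show "phi (x \<otimes> y) = phi x \<otimes>\<^bsub>F\<^esub> phi y" if "x \<in> Q" "y \<in> Q" for x y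
          using phimult that by blast
        show "L #> x = L #> y" if xy: "x \<in> Q" "y \<in> Q" "phi x = phi y" for x y
        proof -
          have "x \<otimes> inv y \<in> P" using phieq[OF xy(1,2)] xy(3) by blast
          hence "x \<otimes> inv y \<in> L" using PL by blast
          thus ?thesis using rcos_eq_iff[OF sL] xy Qc by blast
        qed
        show "\<exists>w\<in>Q. L #> x = L #> w" if "x \<in> Q" for x using that by blast
      qed
      obtain C2 m2 where ch2: "chainP (gR G) (gT G) L Q C2 m2"
        using less.IH[OF c2 f2 refl nL Q LQ cy2] by blast
      show ?thesis using chain_concat[OF ch1 ch2] by blast
    qed
  qed
qed

end


context group begin

lemma refine:
  assumes P: "P \<lhd> G" and Q: "Q \<lhd> G" and PQ: "P \<subseteq> Q" and cyc: "cyclic_group (G\<lparr>carrier := Q\<rparr> Mod P)"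
  shows "\<exists>C m. chainP (gR G) (gT G) P Q C m"
proof (cases "finite (carrier (G\<lparr>carrier := Q\<rparr> Mod P))")
  case True
  thus ?thesis using refine_fin[OF True refl P Q PQ cyc] by blast
next
  case False
  have "gT G P Q" unfolding gT_def using PQ cyc False by simp
  thus ?thesis using chain_one[of "gR G" P Q "gT G"] P Q unfolding gR_def by blast
qed

lemma chain_from_series:
  assumes N0: "N 0 = {\<one>}" and Nm: "N mN = carrier G" and Nn: "\<forall>i\<le>mN. N i \<lhd> G"
    and Ns: "\<forall>i<mN. N i \<subseteq> N (Suc i)" and Nc: "\<forall>i<mN. cyclic_group (G\<lparr>carrier := N (Suc i)\<rparr> Mod N i)"
    and P: "P \<lhd> G" and Q: "Q \<lhd> G" and PQ: "P \<subseteq> Q"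
  shows "\<exists>C m. chainP (gR G) (gT G) P Q C m"
proof -
  define D where "D i = (Q \<inter> N i) <#> P" for i
  have sP: "subgroup P G" using P normal_imp_subgroup by blast
  have sQ: "subgroup Q G" using Q normal_imp_subgroup by blast
  have Pc: "P \<subseteq> carrier G" using subgroup.subset[OF sP] .
  have Qc: "Q \<subseteq> carrier G" using subgroup.subset[OF sQ] .
  have one_P: "\<one> \<in> P" using subgroup.one_closed[OF sP] .
  have DN: "D i \<lhd> G" if "i \<le> mN" for i
    unfolding D_def using normal_subgroup_set_mult_closed[OF normal_subgroup_intersect[OF Q] P] Nn that by blast
  have D0: "D 0 = P"
  proof -
    have "Q \<inter> N 0 = {\<one>}" using N0 subgroup.one_closed[OF sQ] by auto
    hence "D 0 = {\<one>} <#> P" unfolding D_def by simp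
    also have "\<dots> = P"
    proof
      show "{\<one>} <#> P \<subseteq> P" unfolding set_mult_def using Pc by auto
      show "P \<subseteq> {\<one>} <#> P"
      proof
        fix x assume x: "x \<in> P"
        hence "x = \<one> \<otimes> x" using Pc by auto
        thus "x \<in> {\<one>} <#> P" unfolding set_mult_def using x by blast
      qed
    qed
    finally show ?thesis .
  qed
  have Dm: "D mN = Q"
  proof -
    have "Q \<inter> N mN = Q" using Nm Qc by auto
    thus ?thesis unfolding D_def using set_mult_absorb[OF sQ PQ] one_P by auto
  qed
  have QND: "Q \<inter> N i \<subseteq> D i" for i
  proof
    fix x assume x: "x \<in> Q \<inter> N i"
    have "x = x \<otimes> \<one>" using x Qc by auto
    thus "x \<in> D i" unfolding D_def set_mult_def using x one_P by blast
  qed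
  have PD: "P \<subseteq> D i" if i: "i \<le> mN" for i
  proof
    fix x assume x: "x \<in> P"
    have "x = \<one> \<otimes> x" using x Pc by auto
    moreover have "\<one> \<in> Q \<inter> N i"
      using subgroup.one_closed[OF sQ] subgroup.one_closed[OF normal_imp_subgroup] Nn i by blast
    ultimately show "x \<in> D i" unfolding D_def set_mult_def using x by blast
  qed
  have step: "\<exists>C m. chainP (gR G) (gT G) (D i) (D (Suc i)) C m" if i: "i < mN" for i
  proof (rule refine)
    show Di: "D i \<lhd> G" using DN i by simp
    show DSi: "D (Suc i) \<lhd> G" using DN i by simp
    have NS: "N i \<subseteq> N (Suc i)" using Ns i by blast
    show DD: "D i \<subseteq> D (Suc i)" unfolding D_def by (rule mono_set_mult) (use NS in auto)
    have nNi: "N i \<lhd> G" using Nn i by simp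
    have nNS: "N (Suc i) \<lhd> G" using Nn i by simp
    have sNS: "subgroup (N (Suc i)) G" using nNS normal_imp_subgroup by blast
    have sNi: "subgroup (N i) G" using nNi normal_imp_subgroup by blast
    have sDi: "subgroup (D i) G" using Di normal_imp_subgroup by blast
    have sDS: "subgroup (D (Suc i)) G" using DSi normal_imp_subgroup by blast
    have sW: "subgroup (Q \<inter> N (Suc i)) G"
      using normal_subgroup_intersect[OF Q nNS] normal_imp_subgroup by blast
    have gC: "group (G\<lparr>carrier := N (Suc i)\<rparr> Mod N i)" using subquot_group[OF nNi sNS NS] .
    show "cyclic_group (G\<lparr>carrier := D (Suc i)\<rparr> Mod D i)"
    proof (rule cyc_crit[OF Di sDS DD sW QND gC])
      show "cyclic_group (G\<lparr>carrier := N (Suc i)\<rparr> Mod N i)" using Nc i by blast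
      show "N i #> x \<in> carrier (G\<lparr>carrier := N (Suc i)\<rparr> Mod N i)" if "x \<in> Q \<inter> N (Suc i)" for x
        using that unfolding carrier_subquot by blast
      show "N i #> (x \<otimes> y) = (N i #> x) \<otimes>\<^bsub>G\<lparr>carrier := N (Suc i)\<rparr> Mod N i\<^esub> (N i #> y)"
        if "x \<in> Q \<inter> N (Suc i)" "y \<in> Q \<inter> N (Suc i)" for x y
        using normal.rcos_sum[OF nNi, of x y] that Qc by auto
      show "D i #> x = D i #> y"
        if xy: "x \<in> Q \<inter> N (Suc i)" "y \<in> Q \<inter> N (Suc i)" "N i #> x = N i #> y" for x y
      proof -
        have xc: "x \<in> carrier G" and yc: "y \<in> carrier G" using xy Qc by auto
        have "x \<otimes> inv y \<in> N i" using rcos_eq_iff[OF sNi xc yc] xy(3) by blast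
        moreover have "x \<otimes> inv y \<in> Q" using xy subgroup.m_closed[OF sQ] subgroup.m_inv_closed[OF sQ] by blast
        ultimately have "x \<otimes> inv y \<in> D i" using QND by blast
        thus ?thesis using rcos_eq_iff[OF sDi xc yc] by blast
      qed
      show "\<exists>w\<in>Q \<inter> N (Suc i). D i #> x = D i #> w" if x: "x \<in> D (Suc i)" for x
      proof -
        obtain w p where wp: "w \<in> Q \<inter> N (Suc i)" "p \<in> P" "x = w \<otimes> p"
          using x unfolding D_def set_mult_def by blast
        have wc: "w \<in> carrier G" and pc: "p \<in> carrier G" using wp Qc Pc by auto
        have "x \<otimes> inv w = w \<otimes> p \<otimes> inv w" using wp by simp
        moreover have "w \<otimes> p \<otimes> inv w \<in> P" using P wc wp(2) unfolding normal_inv_iff by blast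
        ultimately have "x \<otimes> inv w \<in> D i" using PD[of i] i by auto
        hence "D i #> x = D i #> w" using rcos_eq_iff[OF sDi _ wc] wp wc pc by auto
        thus ?thesis using wp(1) by blast
      qed
    qed
  qed
  have "\<exists>C m. chainP (gR G) (gT G) P (D j) C m" if "j \<le> mN" for j
    using that
  proof (induction j)
    case 0
    show ?case using chain_triv[of "gR G" P "gT G"] P D0 unfolding gR_def by auto
  next
    case (Suc j)
    then obtain C1 m1 where c1: "chainP (gR G) (gT G) P (D j) C1 m1" by auto
    obtain C2 m2 where c2: "chainP (gR G) (gT G) (D j) (D (Suc j)) C2 m2"
      using step[of j] Suc.prems by (metis Suc_le_lessD)
    show ?case using chain_concat[OF c1 c2] by blast
  qed
  thus ?thesis using Dm by auto
qed

end


definition bR :: "('a, 'b) monoid_scheme \<Rightarrow> ('a, 'c) monoid_scheme \<Rightarrow> 'a set \<Rightarrow> bool"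
  where "bR A M U \<longleftrightarrow> brace_ideal A M U"

definition bT :: "('a, 'b) monoid_scheme \<Rightarrow> ('a, 'c) monoid_scheme \<Rightarrow> 'a set \<Rightarrow> 'a set \<Rightarrow> bool"
  where "bT A M U V \<longleftrightarrow> U \<subseteq> V \<and>
    ((infinite (carrier ((A\<lparr>carrier := V\<rparr>) Mod U)) \<and>
            cyclic_group ((A\<lparr>carrier := V\<rparr>) Mod U) \<and>
            carrier ((A\<lparr>carrier := V\<rparr>) Mod U) \<subseteq> brace_socle (A Mod U) (M Mod U))
     \<or> Factorial_Ring.prime (card (carrier ((A\<lparr>carrier := V\<rparr>) Mod U))))"

context brace_loc begin

lemma layer:
  assumes bS: "brace_ideal A M S" and ch: "chainP (gR M) (gT M) S (socpre S) C m"
  shows "chainP (bR A M) (bT A M) S (socpre S) C m"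
proof -
  have TT: "\<And>U V. gT M U V \<Longrightarrow> U \<subseteq> V" unfolding gT_def by blast
  have bd: "S \<subseteq> C i \<and> C i \<subseteq> socpre S" if "i \<le> m" for i using chain_bounds[OF ch TT that] .
  have nC: "C i \<lhd> M" if "i \<le> m" for i using ch that unfolding chainP_def gR_def by blast
  show ?thesis unfolding chainP_def
  proof (intro conjI allI impI)
    show "C 0 = S" "C m = socpre S" using ch unfolding chainP_def by auto
    fix i
    show "i \<le> m \<Longrightarrow> bR A M (C i)" unfolding bR_def using lemmaA[OF bS nC] bd by blast
    assume i: "i < m"
    have g: "gT M (C i) (C (Suc i))" using ch i unfolding chainP_def by blast
    have ft: "carrier (A\<lparr>carrier := C (Suc i)\<rparr> Mod C i) = carrier (M\<lparr>carrier := C (Suc i)\<rparr> Mod C i)"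
      "cyclic_group (A\<lparr>carrier := C (Suc i)\<rparr> Mod C i) \<longleftrightarrow> cyclic_group (M\<lparr>carrier := C (Suc i)\<rparr> Mod C i)"
      "carrier (A\<lparr>carrier := C (Suc i)\<rparr> Mod C i) \<subseteq> brace_socle (A Mod C i) (M Mod C i)"
      using factor_transfer[OF bS nC[of i] nC[of "Suc i"]] bd[of i] bd[of "Suc i"] i g unfolding gT_def
      by auto
    show "bT A M (C i) (C (Suc i))" using g ft unfolding gT_def bT_def by auto
  qed
qed

end

theorem theorem3p28:
  fixes A :: "('a, 'b) monoid_scheme" and M :: "('a, 'c) monoid_scheme"
  assumes "brace A M"
    and "\<exists>n. soc_series A M n = carrier A"
    and "supersoluble_group M"
  shows "supersoluble_brace A M"
proof -
  have gA: "group A" and gM: "group M" and ceq: "carrier A = carrier M"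
    and dist: "\<And>a b c. a \<in> carrier A \<Longrightarrow> b \<in> carrier A \<Longrightarrow> c \<in> carrier A \<Longrightarrow>
        a \<otimes>\<^bsub>M\<^esub> (b \<otimes>\<^bsub>A\<^esub> c)
        = (a \<otimes>\<^bsub>M\<^esub> b) \<otimes>\<^bsub>A\<^esub> inv\<^bsub>A\<^esub> a \<otimes>\<^bsub>A\<^esub> (a \<otimes>\<^bsub>M\<^esub> c)"
    using assms(1) unfolding brace_def by blast+
  interpret B: brace_loc A M
  proof (rule brace_loc.intro[OF gA gM])
    show "brace_loc_axioms A M" unfolding brace_loc_axioms_def using ceq dist by blast
  qed
  obtain n0 where n0: "soc_series A M n0 = carrier A" using assms(2) by blast
  obtain N mN where N: "N 0 = {\<one>\<^bsub>M\<^esub>}" "N mN = carrier M" "\<forall>i\<le>mN. N i \<lhd> M"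
    "\<forall>i<mN. N i \<subseteq> N (Suc i)" "\<forall>i<mN. cyclic_group (M\<lparr>carrier := N (Suc i)\<rparr> Mod N i)"
    using assms(3) unfolding supersoluble_group_def by blast
  have ch: "\<exists>C m. chainP (bR A M) (bT A M) {\<one>\<^bsub>A\<^esub>} (soc_series A M j) C m" for j
  proof (induction j)
    case 0
    show ?case using chain_triv[of "bR A M" "{\<one>\<^bsub>A\<^esub>}" "bT A M"] B.one_ideal unfolding bR_def by auto
  next
    case (Suc j)
    then obtain C1 m1 where c1: "chainP (bR A M) (bT A M) {\<one>\<^bsub>A\<^esub>} (soc_series A M j) C1 m1" by blast
    let ?S = "soc_series A M j"
    have bS: "brace_ideal A M ?S" and eq: "soc_series A M (Suc j) = B.socpre ?S"
      using B.soc_series_facts by auto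
    have nS: "?S \<lhd> M" using B.ideal_nM[OF bS] .
    have nT: "B.socpre ?S \<lhd> M" using B.sp_normal[OF bS] .
    have ST: "?S \<subseteq> B.socpre ?S" using B.J_sub_sp[OF bS] .
    obtain C2 m2 where c2: "chainP (gR M) (gT M) ?S (B.socpre ?S) C2 m2"
      using group.chain_from_series[OF gM N nS nT ST] by blast
    have c2': "chainP (bR A M) (bT A M) ?S (soc_series A M (Suc j)) C2 m2"
      using B.layer[OF bS c2] eq by simp
    show ?case using chain_concat[OF c1 c2'] by blast
  qed
  then obtain C m where "chainP (bR A M) (bT A M) {\<one>\<^bsub>A\<^esub>} (carrier A) C m" using n0 by metis
  hence "C 0 = {\<one>\<^bsub>A\<^esub>} \<and> C m = carrier A \<and> (\<forall>i\<le>m. brace_ideal A M (C i)) \<and>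
        (\<forall>i<m. C i \<subseteq> C (Suc i)) \<and>
        (\<forall>i<m.
           (infinite (carrier ((A\<lparr>carrier := C (Suc i)\<rparr>) Mod (C i))) \<and>
            cyclic_group ((A\<lparr>carrier := C (Suc i)\<rparr>) Mod (C i)) \<and>
            carrier ((A\<lparr>carrier := C (Suc i)\<rparr>) Mod (C i))
              \<subseteq> brace_socle (A Mod (C i)) (M Mod (C i)))
           \<or> Factorial_Ring.prime (card (carrier ((A\<lparr>carrier := C (Suc i)\<rparr>) Mod (C i)))))"
    unfolding chainP_def bR_def bT_def by blast
  thus ?thesis unfolding supersoluble_brace_def by blast
qed


end
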